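(* Let $\mathrm{R}$ be a real closed field, $P,Q,R,S\in\mathrm{R}[X]$ with $P,Q$ not both $0$ and $R,S$ not both $0$, and $a,b\in\mathrm{R}$ with $a<b$. If neither $a$ nor $b$ is a bad number for $P,Q,R,S$, then $$\mathrm{Ind}_a^b(PR-QS,\,PS+QR)=\mathrm{Ind}_a^b(P,Q)+\mathrm{Ind}_a^b(R,S)-\mathrm{Var}_a^b(PS+QR,\,QS).$$
   Context: For nonzero $P\in\mathrm{R}[X]$ and $x\in\mathrm{R}$ write uniquely $P=(X-x)^{\mathrm{mult}_x(P)}P_x$ with $P_x(x)\neq0$. For $P\ne0$, $Q\neq0$ set $\mathrm{val}_x(P/Q)=\mathrm{mult}_x(P)-\mathrm{mult}_x(Q)$, and $\mathrm{val}_x(0/Q)=+\infty$. $\mathrm{Sign}(P,Q,x)=\mathrm{sign}(P_x(x)Q_x(x))$ if $P\ne0$, $Q\ne0$ and $\mathrm{val}_x(P/Q)=0$, and $0$ otherwise. $\mathrm{Var}_a^b(P,Q)=-\tfrac12\mathrm{Sign}(P,Q,a)+\tfrac12\mathrm{Sign}(P,Q,b)$. $\mathrm{Ind}^+_x(P,Q)=\tfrac12\,\mathrm{sign}(P_x(x)Q_x(x))$ and $\mathrm{Ind}^-_x(P,Q)=\tfrac12(-1)^{\mathrm{val}_x(P/Q)}\mathrm{sign}(P_x(x)Q_x(x))$ if $P\ne0$, $Q\neq0$ and $\mathrm{val}_x(P/Q)<0$, both $0$ otherwise; $\mathrm{Ind}_x=\mathrm{Ind}^+_x-\mathrm{Ind}^-_x$;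 for $a<b$, $\mathrm{Ind}_a^b(P,Q)=\mathrm{Ind}_a^+(P,Q)+\sum_{x\in(a,b)}\mathrm{Ind}_x(P,Q)-\mathrm{Ind}_b^-(P,Q)$. A number $c\in\mathrm{R}$ is a bad number for $P,Q,R,S$ if $Q\ne0$, $S\neq0$, $\mathrm{val}_c(P/Q)=\mathrm{val}_c(R/S)<0$ and $\mathrm{val}_c((PS+QR)/(QS))=0$. *)

theory Defs
  imports "HOL-Computational_Algebra.Polynomial"
begin

class real_closed_field = linordered_field +
  assumes rcf_sqrt: "0 \<le> x \<Longrightarrow> \<exists>y. y * y = x"
  assumes rcf_odd_root: "odd n \<Longrightarrow> c n \<noteq> 0 \<Longrightarrow> \<exists>x. (\<Sum>i\<le>n. c i * x ^ i) = 0"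

text \<open>mult_x(P) is \<open>order x P\<close>; P_x is the cofactor of (X-x)^mult.\<close>
definition cof :: "'a::field poly \<Rightarrow> 'a \<Rightarrow> 'a poly" where
  "cof P x = P div [:-x, 1:] ^ order x P"

definition val :: "'a::field poly \<Rightarrow> 'a poly \<Rightarrow> 'a \<Rightarrow> int" where
  "val P Q x = int (order x P) - int (order x Q)"

definition Sign :: "'a::linordered_field poly \<Rightarrow> 'a poly \<Rightarrow> 'a \<Rightarrow> 'a" where
  "Sign P Q x = (if P \<noteq> 0 \<and> Q \<noteq> 0 \<and> val P Q x = 0
     then sgn (poly (cof P x) x * poly (cof Q x) x) else 0)"

definition Var :: "'a::linordered_field poly \<Rightarrow> 'a poly \<Rightarrow> 'a \<Rightarrow> 'a \<Rightarrow> 'a" where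
  "Var P Q a b = - Sign P Q a / 2 + Sign P Q b / 2"

definition Ind_plus :: "'a::linordered_field poly \<Rightarrow> 'a poly \<Rightarrow> 'a \<Rightarrow> 'a" where
  "Ind_plus P Q x = (if P \<noteq> 0 \<and> Q \<noteq> 0 \<and> val P Q x < 0
     then sgn (poly (cof P x) x * poly (cof Q x) x) / 2 else 0)"

definition Ind_minus :: "'a::linordered_field poly \<Rightarrow> 'a poly \<Rightarrow> 'a \<Rightarrow> 'a" where
  "Ind_minus P Q x = (if P \<noteq> 0 \<and> Q \<noteq> 0 \<and> val P Q x < 0
     then (-1) powi (val P Q x) * sgn (poly (cof P x) x * poly (cof Q x) x) / 2 else 0)"

definition Ind_at :: "'a::linordered_field poly \<Rightarrow> 'a poly \<Rightarrow> 'a \<Rightarrow> 'a" where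
  "Ind_at P Q x = Ind_plus P Q x - Ind_minus P Q x"

text \<open>Ind_a^b; the sum over (a,b) has finite support (points with Ind_x \<noteq> 0 are roots of Q).\<close>
definition Ind :: "'a::linordered_field poly \<Rightarrow> 'a poly \<Rightarrow> 'a \<Rightarrow> 'a \<Rightarrow> 'a" where
  "Ind P Q a b = Ind_plus P Q a
     + (\<Sum>x\<in>{x. a < x \<and> x < b \<and> Ind_at P Q x \<noteq> 0}. Ind_at P Q x)
     - Ind_minus P Q b"

text \<open>c is a bad number for P,Q,R,S. Since val = +\<infinity> when the numerator is 0,
 the conditions val < 0 and val = 0 force the numerators to be nonzero.\<close>
definition bad_number :: "'a::linordered_field poly \<Rightarrow> 'a poly \<Rightarrow> 'a poly \<Rightarrow> 'a poly \<Rightarrow> 'a \<Rightarrow> bool" where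
  "bad_number P Q R S c \<longleftrightarrow> Q \<noteq> 0 \<and> S \<noteq> 0 \<and> P \<noteq> 0 \<and> R \<noteq> 0
     \<and> val P Q c = val R S c \<and> val P Q c < 0
     \<and> P * S + Q * R \<noteq> 0 \<and> val (P * S + Q * R) (Q * S) c = 0"

end

theory Submission
  imports Defs "HOL-Algebra.Algebraic_Closure_Type"
begin


subsection \<open>Embedding into the algebraic closure\<close>

lemma map_emb_add: "map_poly to_ac (p + q) = map_poly to_ac p + map_poly to_ac (q::'a::field poly)"
  by (rule poly_eqI) (simp add: coeff_map_poly)

lemma map_emb_diff: "map_poly to_ac (p - q) = map_poly to_ac p - map_poly to_ac (q::'a::field poly)"
  by (rule poly_eqI) (simp add: coeff_map_poly)

lemma map_emb_mult: "map_poly to_ac (p * q) = map_poly to_ac p * map_poly to_ac (q::'a::field poly)"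
  by (rule poly_eqI) (simp add: coeff_map_poly coeff_mult to_ac_sum)

lemma map_emb_smult: "map_poly to_ac (Polynomial.smult c p) = Polynomial.smult (to_ac c) (map_poly to_ac (p::'a::field poly))"
  by (rule poly_eqI) (simp add: coeff_map_poly)

lemma map_emb_pCons: "map_poly to_ac (pCons c p) = pCons (to_ac c) (map_poly to_ac (p::'a::field poly))"
  by (simp add: map_poly_pCons)

lemma poly_map_emb: "poly (map_poly to_ac p) (to_ac x) = to_ac (poly (p::'a::field poly) x)"
  by (induction p) (auto simp: map_emb_pCons)

lemma degree_map_emb [simp]: "Polynomial.degree (map_poly to_ac p) = Polynomial.degree (p::'a::field poly)"
  by (rule degree_map_poly) simp

lemma lead_coeff_map_emb [simp]: "Polynomial.lead_coeff (map_poly to_ac p) = to_ac (Polynomial.lead_coeff (p::'a::field poly))"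
  by (simp add: coeff_map_poly)

lemma map_emb_eq_0_iff [simp]: "map_poly to_ac p = 0 \<longleftrightarrow> (p::'a::field poly) = 0"
  by (simp add: map_poly_eq_0_iff)

lemma range_emb_mult: "a \<in> range to_ac \<Longrightarrow> b \<in> range to_ac \<Longrightarrow> a * b \<in> range (to_ac :: 'a::field \<Rightarrow> _)"
  by (elim rangeE) (simp flip: to_ac_mult)
lemma range_emb_add: "a \<in> range to_ac \<Longrightarrow> b \<in> range to_ac \<Longrightarrow> a + b \<in> range (to_ac :: 'a::field \<Rightarrow> _)"
  by (elim rangeE) (simp flip: to_ac_add)
lemma range_emb_diff: "a \<in> range to_ac \<Longrightarrow> b \<in> range to_ac \<Longrightarrow> a - b \<in> range (to_ac :: 'a::field \<Rightarrow> _)"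
  by (elim rangeE) (simp flip: to_ac_diff)
lemma range_emb_divide: "a \<in> range to_ac \<Longrightarrow> b \<in> range to_ac \<Longrightarrow> a / b \<in> range (to_ac :: 'a::field \<Rightarrow> _)"
  by (elim rangeE) (simp flip: to_ac_divide)
lemma range_emb_power: "a \<in> range to_ac \<Longrightarrow> a ^ n \<in> range (to_ac :: 'a::field \<Rightarrow> _)"
  by (elim rangeE) (simp flip: to_ac_power)
lemma range_emb_minus: "a \<in> range to_ac \<Longrightarrow> - a \<in> range (to_ac :: 'a::field \<Rightarrow> _)"
  by (elim rangeE) (simp flip: to_ac_minus)
lemma range_emb_0: "0 \<in> range (to_ac :: 'a::field \<Rightarrow> _)"
  by (metis rangeI to_ac_0[where 'a='a])
lemma range_emb_1: "1 \<in> range (to_ac :: 'a::field \<Rightarrow> _)"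
  by (metis rangeI to_ac_1[where 'a='a])

lemma range_emb_prod_mset:
  "(\<And>x. x \<in># A \<Longrightarrow> f x \<in> range to_ac) \<Longrightarrow> (\<Prod>x\<in>#A. f x) \<in> range (to_ac :: 'a::field \<Rightarrow> _)"
  by (induction A) (auto intro: range_emb_mult range_emb_1)

subsection \<open>Square roots\<close>

definition rsqrt :: "'a::real_closed_field \<Rightarrow> 'a" where
  "rsqrt x = (SOME y. y \<ge> 0 \<and> y * y = x)"

lemma rsqrt: assumes "0 \<le> (x::'a::real_closed_field)" shows "rsqrt x \<ge> 0" "rsqrt x * rsqrt x = x"
proof -
  obtain y where "y * y = x" using rcf_sqrt[OF assms] by blast
  hence "\<bar>y\<bar> \<ge> 0 \<and> \<bar>y\<bar> * \<bar>y\<bar> = x" by (simp add: abs_mult_self_eq)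
  hence "rsqrt x \<ge> 0 \<and> rsqrt x * rsqrt x = x" unfolding rsqrt_def by (rule someI)
  thus "rsqrt x \<ge> 0" "rsqrt x * rsqrt x = x" by auto
qed

lemma rsqrt_unique: assumes "0 \<le> (y::'a::real_closed_field)" "y * y = x" shows "rsqrt x = y"
proof -
  have x: "x \<ge> 0" using assms by auto
  note r = rsqrt[OF x]
  have "(rsqrt x - y) * (rsqrt x + y) = 0" using r assms by (simp add: algebra_simps)
  hence "rsqrt x = y \<or> rsqrt x + y = 0" by auto
  thus ?thesis using r assms by auto
qed

subsection \<open>The imaginary unit and the field R(i)\<close>

definition ii :: "'a::field alg_closure" where "ii = (SOME z. z * z = -1)"

lemma ii_sq: "ii * ii = (-1 :: 'a::field alg_closure)"
proof -
  obtain y :: "'a alg_closure" where "y ^ 2 = -1" using nth_root_exists[of 2 "-1"] by auto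
  hence "y * y = -1" by (simp add: power2_eq_square)
  thus ?thesis unfolding ii_def by (rule someI)
qed

lemma ii_not_real: "ii \<noteq> to_ac (c::'a::real_closed_field)"
proof
  assume "ii = to_ac c"
  hence "to_ac c * to_ac c = -1" using ii_sq[where 'a='a] by simp
  hence "to_ac (c * c) = to_ac (-1)" by (simp only: to_ac_mult to_ac_minus to_ac_1)
  hence "c * c = -1" by (simp only: to_ac_eq_iff)
  moreover have "c * c \<ge> 0" by simp
  ultimately show False by simp
qed

lemma K_indep:
  assumes "to_ac a + ii * to_ac b = to_ac (c::'a::real_closed_field)"
  shows "b = 0 \<and> a = c"
proof (cases "b = 0")
  case True thus ?thesis using assms by simp
next
  case False
  have "ii * to_ac b = to_ac (c - a)" using assms by (simp add: algebra_simps)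
  hence "ii = to_ac ((c - a) / b)" using False by (simp add: field_simps)
  thus ?thesis using ii_not_real by blast
qed

definition KK :: "'a::field alg_closure set" where
  "KK = {to_ac a + ii * to_ac b | a b. True}"

lemma KK_I: "to_ac a + ii * to_ac b \<in> KK" unfolding KK_def by blast
lemma KK_E: assumes "z \<in> KK" obtains a b where "z = to_ac a + ii * to_ac b"
  using assms unfolding KK_def by blast

lemma KK_real: "to_ac a \<in> KK"
  using KK_I[of a 0] by simp

lemma KK_add: "z \<in> KK \<Longrightarrow> w \<in> KK \<Longrightarrow> z + w \<in> KK"
proof -
  assume "z \<in> KK" "w \<in> KK"
  then obtain a b c d where "z = to_ac a + ii * to_ac b" "w = to_ac c + ii * to_ac d"
    by (metis KK_E)
  hence "z + w = to_ac (a + c) + ii * to_ac (b + d)" by (simp add: algebra_simps)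
  thus ?thesis using KK_I by metis
qed

lemma KK_minus: "z \<in> KK \<Longrightarrow> - z \<in> KK"
proof -
  assume "z \<in> KK"
  then obtain a b where "z = to_ac a + ii * to_ac b" by (metis KK_E)
  hence "- z = to_ac (- a) + ii * to_ac (- b)" by (simp add: algebra_simps)
  thus ?thesis using KK_I by metis
qed

lemma KK_diff: "z \<in> KK \<Longrightarrow> w \<in> KK \<Longrightarrow> z - w \<in> KK"
  using KK_add[of z "-w"] KK_minus[of w] by simp

lemma KK_mult: "z \<in> KK \<Longrightarrow> w \<in> KK \<Longrightarrow> z * w \<in> KK"
proof -
  assume "z \<in> KK" "w \<in> KK"
  then obtain a b c d where zw: "z = to_ac a + ii * to_ac b" "w = to_ac c + ii * to_ac d"
    by (metis KK_E)
  have "z * w = to_ac a * to_ac c + (ii * ii) * (to_ac b * to_ac d) + ii * (to_ac a * to_ac d + to_ac b * to_ac c)"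
    unfolding zw by (simp add: algebra_simps)
  also have "\<dots> = to_ac (a * c - b * d) + ii * to_ac (a * d + b * c)"
    by (simp add: ii_sq)
  finally show ?thesis using KK_I by metis
qed

lemma KK_scale: "z \<in> KK \<Longrightarrow> to_ac c * z \<in> KK"
  using KK_mult KK_real by blast

lemma KK_sqrt:
  assumes "z \<in> (KK :: 'a::real_closed_field alg_closure set)"
  shows "\<exists>w\<in>KK. w * w = z"
proof -
  obtain a b where z: "z = to_ac a + ii * to_ac b" using assms by (metis KK_E)
  define \<rho> where "\<rho> = rsqrt (a * a + b * b)"
  have ab: "a * a + b * b \<ge> 0" by (simp add: add_nonneg_nonneg)
  have \<rho>0: "\<rho> \<ge> 0" and \<rho>2: "\<rho> * \<rho> = a * a + b * b" using rsqrt[OF ab] by (auto simp: \<rho>_def)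
  have "\<bar>a\<bar> \<le> \<rho>"
  proof (rule ccontr)
    assume "\<not> \<bar>a\<bar> \<le> \<rho>"
    hence "\<rho> < \<bar>a\<bar>" by simp
    hence "\<rho> * \<rho> < \<bar>a\<bar> * \<bar>a\<bar>" using \<rho>0 by (intro mult_strict_mono) auto
    hence "\<rho> * \<rho> < a * a" by simp
    moreover have "b * b \<ge> 0" by simp
    ultimately show False using \<rho>2 by simp
  qed
  hence p1: "(\<rho> + a) / 2 \<ge> 0" and p2: "(\<rho> - a) / 2 \<ge> 0" by auto
  define u where "u = rsqrt ((\<rho> + a) / 2)"
  define v' where "v' = rsqrt ((\<rho> - a) / 2)"
  define v where "v = (if b \<ge> 0 then v' else - v')"
  have u: "u \<ge> 0" "u * u = (\<rho> + a) / 2" using rsqrt[OF p1] by (auto simp: u_def)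
  have v': "v' \<ge> 0" "v' * v' = (\<rho> - a) / 2" using rsqrt[OF p2] by (auto simp: v'_def)
  have "(u * v') * (u * v') = (u * u) * (v' * v')" by (simp add: mult_ac)
  also have "\<dots> = ((\<rho> + a) / 2) * ((\<rho> - a) / 2)" by (simp only: u(2) v'(2))
  also have "\<dots> = (\<rho> * \<rho> - a * a) / 4" by (simp add: field_simps)
  also have "\<dots> = (\<bar>b\<bar> / 2) * (\<bar>b\<bar> / 2)" using \<rho>2 by (simp add: abs_mult_self_eq)
  finally have "u * v' = \<bar>b\<bar> / 2"
    using u v' rsqrt_unique by (metis abs_ge_zero divide_nonneg_pos mult_nonneg_nonneg zero_less_numeral)
  hence uv: "2 * (u * v) = b" unfolding v_def by auto
  have uv2: "u * u - v * v = a" using u v' unfolding v_def by (auto simp: field_simps)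
  define w where "w = to_ac u + ii * to_ac v"
  have "w * w = to_ac u * to_ac u + (ii * ii) * (to_ac v * to_ac v) + ii * (2 * (to_ac u * to_ac v))"
    unfolding w_def by (simp add: algebra_simps)
  also have "\<dots> = to_ac (u * u - v * v) + ii * to_ac (2 * (u * v))"
    by (simp add: ii_sq)
  also have "\<dots> = z" using uv uv2 z by simp
  finally show ?thesis using KK_I w_def by metis
qed

lemma KK_quadratic:
  fixes x :: "'a::real_closed_field alg_closure"
  assumes "s \<in> KK" "t \<in> KK" "x * x - s * x + t = 0"
  shows "x \<in> KK"
proof -
  have "s * s - 4 * t \<in> KK"
    using assms by (intro KK_diff KK_mult KK_scale[of _ 4, simplified]) auto
  then obtain w where w: "w \<in> KK" "w * w = s * s - 4 * t" using KK_sqrt by blast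
  have "(x - (s + w) / 2) * (x - (s - w) / 2) = x * x - s * x + (s * s - w * w) / 4"
    by (simp add: field_simps)
  also have "\<dots> = 0"
  proof -
    have t: "t = s * x - x * x" using assms(3) by (simp add: algebra_simps)
    show ?thesis unfolding w(2) t by (simp add: field_simps)
  qed
  finally have "x = (s + w) / 2 \<or> x = (s - w) / 2" by auto
  moreover have "(s + w) / 2 \<in> KK" "(s - w) / 2 \<in> KK"
    using KK_scale[of "s + w" "1/2"] KK_scale[of "s - w" "1/2"] KK_add KK_diff assms w
    by (auto simp: to_ac_divide)
  ultimately show ?thesis by blast
qed



lemma odd_real_root:
  fixes p :: "'a::real_closed_field poly"
  assumes "odd (Polynomial.degree p)"
  shows "\<exists>x. poly p x = 0"
proof -
  have "p \<noteq> 0" using assms by auto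
  hence "Polynomial.coeff p (Polynomial.degree p) \<noteq> 0" by simp
  from rcf_odd_root[of "Polynomial.degree p" "Polynomial.coeff p", OF assms this] obtain x where
    "(\<Sum>i\<le>Polynomial.degree p. Polynomial.coeff p i * x ^ i) = 0" by blast
  thus ?thesis by (auto simp: poly_altdef)
qed

lemma interp:
  fixes P :: "'a::field alg_closure poly"
  assumes "infinite S" "\<forall>x\<in>S. poly P (to_ac x) \<in> range to_ac"
  shows "\<exists>P'. P = map_poly to_ac P'"
  using assms
proof (induction "Polynomial.degree P" arbitrary: P S)
  case 0
  then obtain c where c: "P = [:c:]" by (metis degree_eq_zeroE)
  from 0 obtain x0 where "x0 \<in> S" by (metis finite.emptyI ex_in_conv)
  with 0 c obtain d where "c = to_ac d" by auto
  hence "P = map_poly to_ac [:d:]" using c by (simp add: map_emb_pCons)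
  thus ?case by blast
next
  case (Suc n)
  from Suc obtain x0 where x0: "x0 \<in> S" by (metis finite.emptyI ex_in_conv)
  with Suc obtain d where d: "poly P (to_ac x0) = to_ac d" by auto
  define P1 where "P1 = synthetic_div P (to_ac x0)"
  have eq: "P = [:-to_ac x0, 1:] * P1 + [:to_ac d:]"
    using synthetic_div_correct'[of "to_ac x0" P] d unfolding P1_def by simp
  have deg: "n = Polynomial.degree P1" using Suc(2) unfolding P1_def by (simp add: degree_synthetic_div)
  have "\<forall>x\<in>S - {x0}. poly P1 (to_ac x) \<in> range to_ac"
  proof
    fix x assume x: "x \<in> S - {x0}"
    have "poly P (to_ac x) = (to_ac x - to_ac x0) * poly P1 (to_ac x) + to_ac d"
      by (subst eq) (simp add: algebra_simps)
    hence "poly P1 (to_ac x) = (poly P (to_ac x) - to_ac d) / (to_ac x - to_ac x0)"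
      using x by (simp add: field_simps)
    thus "poly P1 (to_ac x) \<in> range to_ac"
      using x Suc(4) by (auto intro!: range_emb_divide range_emb_diff)
  qed
  moreover have "infinite (S - {x0})" using Suc(3) by simp
  ultimately obtain P1' where "P1 = map_poly to_ac P1'" using Suc(1)[OF deg] by blast
  hence "P = map_poly to_ac ([:-x0, 1:] * P1' + [:d:])"
    by (subst eq) (simp add: map_emb_add map_emb_mult map_emb_pCons map_emb_diff map_emb_smult)
  thus ?case by blast
qed

lemma degree_linear_factors:
  "Polynomial.degree (\<Prod>x\<in>#A. [:- x, 1:]) = size (A :: 'a::field multiset)"
proof (induction A)
  case (add a A)
  have nz: "(\<Prod>x\<in>#A. [:- x, 1:]) \<noteq> 0" by (auto simp: prod_mset_zero_iff)
  have "Polynomial.degree ([:- a, 1:] * (\<Prod>x\<in>#A. [:- x, 1:])) = Polynomial.degree [:- a, 1:] + Polynomial.degree (\<Prod>x\<in>#A. [:- x, 1:])"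
    by (rule degree_mult_eq) (use nz in auto)
  thus ?case using add by (simp add: left_diff_distrib)
qed simp

lemma prod_mset_const_mult:
  "(\<Prod>x\<in>#A. c * f x) = c ^ size A * (\<Prod>x\<in>#A. f x)"
  by (induction A) (auto simp: algebra_simps)

lemma poly_linear_factors:
  "poly (\<Prod>x\<in>#A. [:- x, 1:]) y = (\<Prod>x\<in>#A. y - (x::'a::comm_ring_1))"
proof (induction A)
  case (add a A)
  have "poly [:- a, 1:] y = y - a" by simp
  thus ?case using add by (simp add: left_diff_distrib)
qed simp

lemma norm_lemma:
  fixes p G :: "'a::field poly"
  assumes "p \<noteq> 0" "map_poly to_ac p = Polynomial.smult (to_ac (Polynomial.lead_coeff p)) (\<Prod>x\<in>#A. [:-x,1:])"
  shows "(\<Prod>x\<in>#A. poly (map_poly to_ac G) x) \<in> range to_ac"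
  using assms
proof (induction "Polynomial.degree p" arbitrary: p G A rule: less_induct)
  case less
  have sizeA: "size A = Polynomial.degree p"
    using arg_cong[OF less.prems(2), of Polynomial.degree] less.prems(1)
    by (simp add: degree_linear_factors)
  have root: "poly (map_poly to_ac p) x = 0" if "x \<in># A" for x
  proof -
    have "poly (\<Prod>x\<in>#A. [:-x,1:]) x = 0"
      using that by (auto simp: poly_linear_factors prod_mset_zero_iff)
    thus ?thesis by (subst less.prems(2)) simp
  qed
  show ?case
  proof (cases "Polynomial.degree p = 0")
    case True
    hence "A = {#}" using sizeA by simp
    thus ?thesis by (simp add: range_emb_1)
  next
    case False
    define G' where "G' = G mod p"
    have eqG: "G = G div p * p + G'" unfolding G'_def by simp
    have same: "poly (map_poly to_ac G) x = poly (map_poly to_ac G') x" if "x \<in># A" for x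
      by (subst eqG) (simp add: map_emb_add map_emb_mult root[OF that])
    hence prod_eq: "(\<Prod>x\<in>#A. poly (map_poly to_ac G) x) = (\<Prod>x\<in>#A. poly (map_poly to_ac G') x)"
      by (intro arg_cong[where f=prod_mset] image_mset_cong) auto
    show ?thesis
    proof (cases "G' = 0")
      case True
      have "A \<noteq> {#}" using False sizeA by auto
      then obtain a where "a \<in># A" by auto
      have "size A > 0" using False sizeA by simp
      hence "(\<Prod>x\<in>#A. poly (map_poly to_ac G') x) = 0" using True
        by (auto simp: prod_mset_zero_iff)
      thus ?thesis using prod_eq by (metis range_emb_0)
    next
      case G'0: False
      have degG': "Polynomial.degree G' < Polynomial.degree p"
        unfolding G'_def using False G'0 degree_mod_less' by (metis G'_def less.prems(1))
      obtain B where B: "size B = Polynomial.degree (map_poly to_ac G')"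
        "map_poly to_ac G' = Polynomial.smult (Polynomial.lead_coeff (map_poly to_ac G')) (\<Prod>x\<in>#B. [:-x,1:])"
        using alg_closed_imp_factorization[of "map_poly to_ac G'"] G'0 by auto
      have B2: "map_poly to_ac G' = Polynomial.smult (to_ac (Polynomial.lead_coeff G')) (\<Prod>x\<in>#B. [:-x,1:])"
        using B(2) by (simp only: lead_coeff_map_emb)
      have IH: "(\<Prod>y\<in>#B. poly (map_poly to_ac p) y) \<in> range to_ac"
        using less.hyps[OF degG' G'0 B2] .
      define XX where "XX = (\<Prod>x\<in>#A. \<Prod>y\<in>#B. x - y)"
      have e1: "(\<Prod>x\<in>#A. poly (map_poly to_ac G') x) = to_ac (Polynomial.lead_coeff G') ^ size A * XX"
      proof -
        have "(\<Prod>x\<in>#A. poly (map_poly to_ac G') x) = (\<Prod>x\<in>#A. to_ac (Polynomial.lead_coeff G') * (\<Prod>y\<in>#B. x - y))"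
        proof -
          have "\<And>x. poly (map_poly to_ac G') x = to_ac (Polynomial.lead_coeff G') * (\<Prod>y\<in>#B. x - y)"
            by (subst B2) (simp add: poly_linear_factors)
          thus ?thesis by simp
        qed
        thus ?thesis unfolding XX_def by (simp add: prod_mset_const_mult)
      qed
      have e2: "(\<Prod>y\<in>#B. poly (map_poly to_ac p) y) = to_ac (Polynomial.lead_coeff p) ^ size B * ((-1) ^ size A) ^ size B * XX"
      proof -
        have "(\<Prod>y\<in>#B. poly (map_poly to_ac p) y) = (\<Prod>y\<in>#B. to_ac (Polynomial.lead_coeff p) * (\<Prod>x\<in>#A. y - x))"
        proof -
          have "\<And>y. poly (map_poly to_ac p) y = to_ac (Polynomial.lead_coeff p) * (\<Prod>x\<in>#A. y - x)"
            by (subst less.prems(2)) (simp add: poly_linear_factors)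
          thus ?thesis by simp
        qed
        also have "\<dots> = to_ac (Polynomial.lead_coeff p) ^ size B * (\<Prod>y\<in>#B. \<Prod>x\<in>#A. (-1) * (x - y))"
          by (simp add: prod_mset_const_mult)
        also have "\<dots> = to_ac (Polynomial.lead_coeff p) ^ size B * (\<Prod>y\<in>#B. (-1) ^ size A * (\<Prod>x\<in>#A. x - y))"
          by (simp only: prod_mset_const_mult)
        also have "\<dots> = to_ac (Polynomial.lead_coeff p) ^ size B * (((-1) ^ size A) ^ size B * (\<Prod>y\<in>#B. \<Prod>x\<in>#A. x - y))"
          by (simp only: prod_mset_const_mult)
        also have "(\<Prod>y\<in>#B. \<Prod>x\<in>#A. x - y) = XX"
          unfolding XX_def by (rule prod_mset.swap)
        finally show ?thesis by (simp add: mult_ac)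
      qed
      have nz: "to_ac (Polynomial.lead_coeff p) ^ size B * ((-1) ^ size A) ^ size B \<noteq> (0 :: 'a alg_closure)"
        using less.prems(1) by simp
      have "XX = (\<Prod>y\<in>#B. poly (map_poly to_ac p) y) / (to_ac (Polynomial.lead_coeff p) ^ size B * ((-1) ^ size A) ^ size B)"
        using nz unfolding e2 by (simp add: field_simps)
      hence "XX \<in> range to_ac" using IH
        by (simp add: range_emb_divide range_emb_mult range_emb_power range_emb_minus range_emb_1 del: to_ac_power)
      hence "(\<Prod>x\<in>#A. poly (map_poly to_ac G') x) \<in> range to_ac"
        unfolding e1 by (intro range_emb_mult range_emb_power) auto
      thus ?thesis using prod_eq by simp
    qed
  qed
qed



lemma sq_cases:
  fixes z :: "'a::real_closed_field alg_closure"
  assumes "z * z = to_ac a"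
  shows "z \<in> range to_ac \<or> (\<exists>t. z = ii * to_ac t)"
proof (cases "a \<ge> 0")
  case True
  define s where "s = rsqrt a"
  have "s * s = a" using rsqrt[OF True] s_def by auto
  hence "(z - to_ac s) * (z + to_ac s) = 0" using assms
    by (simp add: algebra_simps flip: to_ac_mult)
  hence "z = to_ac s \<or> z = - to_ac s" by (auto simp: eq_neg_iff_add_eq_0)
  thus ?thesis by (auto simp flip: to_ac_minus)
next
  case False
  hence a: "- a \<ge> 0" by simp
  define s where "s = rsqrt (- a)"
  have ss: "s * s = - a" using rsqrt[OF a] s_def by auto
  have "(z - ii * to_ac s) * (z + ii * to_ac s) = z * z - (ii * ii) * (to_ac s * to_ac s)"
    by (simp add: algebra_simps)
  also have "\<dots> = 0" using assms ss by (simp add: ii_sq flip: to_ac_mult)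
  finally have "z = ii * to_ac s \<or> z = ii * to_ac (- s)" by (auto simp: eq_neg_iff_add_eq_0)
  thus ?thesis by blast
qed

lemma prod_mset_mset_nth:
  "(\<Prod>x\<in>#mset xs. f x) = (\<Prod>j<length xs. f (xs ! j))"
proof (induction xs)
  case (Cons a xs)
  thus ?case by (simp del: prod.lessThan_Suc add: prod.lessThan_Suc_shift)
qed simp

definition pairs :: "nat \<Rightarrow> (nat \<times> nat) set" where
  "pairs n = {(i, j). i < j \<and> j < n}"

lemma pairs_Suc: "pairs (Suc n) = pairs n \<union> (\<lambda>i. (i, n)) ` {..<n}"
  unfolding pairs_def by auto

lemma finite_pairs [simp]: "finite (pairs n)"
  by (rule finite_subset[of _ "{..<n} \<times> {..<n}"]) (auto simp: pairs_def)

lemma card_pairs: "2 * card (pairs n) = n * (n - 1)"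
proof (induction n)
  case 0 thus ?case by (simp add: pairs_def)
next
  case (Suc n)
  have "card (pairs (Suc n)) = card (pairs n) + card ((\<lambda>i. (i, n)) ` {..<n})"
    unfolding pairs_Suc by (rule card_Un_disjoint) (use finite_pairs[of n] in \<open>auto simp: pairs_def\<close>)
  also have "card ((\<lambda>i. (i, n)) ` {..<n}) = n" by (subst card_image) (auto simp: inj_on_def)
  finally show ?case using Suc by (cases n) (auto simp: algebra_simps)
qed

lemma prod_square_decomp:
  fixes g :: "nat \<Rightarrow> nat \<Rightarrow> 'b::comm_monoid_mult"
  assumes gsym: "\<And>i j. g i j = g j i"
  shows "(\<Prod>i<n. \<Prod>j<n. g i j) = (\<Prod>i<n. g i i) * (\<Prod>pr\<in>pairs n. g (fst pr) (snd pr)) ^ 2"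
proof (induction n)
  case 0 thus ?case by (simp add: pairs_def)
next
  case (Suc n)
  have pr: "(\<Prod>pr\<in>pairs (Suc n). g (fst pr) (snd pr)) = (\<Prod>pr\<in>pairs n. g (fst pr) (snd pr)) * (\<Prod>i<n. g i n)"
  proof -
    have "(\<Prod>pr\<in>pairs (Suc n). g (fst pr) (snd pr)) = (\<Prod>pr\<in>pairs n. g (fst pr) (snd pr)) * (\<Prod>pr\<in>(\<lambda>i. (i, n)) ` {..<n}. g (fst pr) (snd pr))"
      unfolding pairs_Suc by (rule prod.union_disjoint) (use finite_pairs[of n] in \<open>auto simp: pairs_def\<close>)
    also have "(\<Prod>pr\<in>(\<lambda>i. (i, n)) ` {..<n}. g (fst pr) (snd pr)) = (\<Prod>i<n. g i n)"
      by (subst prod.reindex) (auto simp: inj_on_def)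
    finally show ?thesis .
  qed
  have "(\<Prod>i<Suc n. \<Prod>j<Suc n. g i j) = (\<Prod>i<Suc n. (\<Prod>j<n. g i j) * g i n)"
    by simp
  also have "\<dots> = (\<Prod>i<n. (\<Prod>j<n. g i j) * g i n) * ((\<Prod>j<n. g n j) * g n n)"
    by simp
  also have "\<dots> = (\<Prod>i<n. \<Prod>j<n. g i j) * (\<Prod>i<n. g i n) * (\<Prod>j<n. g j n) * g n n"
  proof -
    have "(\<Prod>j<n. g n j) = (\<Prod>j<n. g j n)" by (rule prod.cong) (auto intro: gsym)
    thus ?thesis by (simp only: prod.distrib mult_ac)
  qed
  also have "\<dots> = (\<Prod>i<Suc n. g i i) * (\<Prod>pr\<in>pairs (Suc n). g (fst pr) (snd pr)) ^ 2"
    unfolding Suc pr by (simp add: power2_eq_square mult_ac)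
  finally show ?case .
qed

lemma Delta_infinite:
  fixes D :: "'a::field_char_0 alg_closure poly"
  assumes "D \<noteq> 0"
  shows "infinite {x::'a. poly D (to_ac x) \<noteq> 0}"
proof -
  have "finite (to_ac -` {z. poly D z = 0})"
    by (rule finite_vimageI) (use poly_roots_finite[OF assms] inj_to_ac in auto)
  hence "finite {x::'a. poly D (to_ac x) = 0}" by (simp add: vimage_def)
  moreover have "{x::'a. poly D (to_ac x) \<noteq> 0} = UNIV - {x. poly D (to_ac x) = 0}" by auto
  ultimately show ?thesis using Diff_infinite_finite infinite_UNIV_char_0 by metis
qed

lemma pairs_claim:
  fixes p :: "'a::real_closed_field poly" and r :: "nat \<Rightarrow> 'a alg_closure"
  assumes p0: "p \<noteq> 0"
    and fac: "map_poly to_ac p = Polynomial.smult (to_ac (Polynomial.lead_coeff p)) (\<Prod>j<n. [:-r j, 1:])"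
    and AA: "(\<Prod>x\<in>#A. [:-x, 1:]) = (\<Prod>j<n. [:-r j, 1:])"
    and Aprod: "\<And>f :: 'a alg_closure \<Rightarrow> 'a alg_closure. (\<Prod>x\<in>#A. f x) = (\<Prod>j<n. f (r j))"
  shows "\<exists>q'. (\<Prod>pr\<in>pairs n. [:-(r (fst pr) + r (snd pr) + to_ac c * r (fst pr) * r (snd pr)), 1:]) = map_poly to_ac q'"
proof -
  define h where "h i j = r i + r j + to_ac c * r i * r j" for i j
  define qc where "qc = (\<Prod>pr\<in>pairs n. [:-(h (fst pr) (snd pr)), 1:])"
  define Phi where "Phi x = (\<Prod>i<n. \<Prod>j<n. to_ac x - h i j)" for x
  define Delta where "Delta x = (\<Prod>i<n. to_ac x - h i i)" for x
  have fac': "map_poly to_ac p = Polynomial.smult (to_ac (Polynomial.lead_coeff p)) (\<Prod>x\<in>#A. [:-x,1:])"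
    using fac AA by simp
  have lc0: "to_ac (Polynomial.lead_coeff p) \<noteq> 0" using p0 by simp
  have Phi_real: "Phi x \<in> range to_ac" for x
  proof -
    define Gx where "Gx = (\<Prod>j<n. [: to_ac x - r j, -(1 + to_ac c * r j) :])"
    have polyGx: "poly Gx Y = (\<Prod>j<n. to_ac x - r j - (1 + to_ac c * r j) * Y)" for Y
      unfolding Gx_def poly_prod by (intro prod.cong) (auto simp: algebra_simps)
    have "\<forall>y\<in>UNIV. poly Gx (to_ac y) \<in> range to_ac"
    proof
      fix y :: 'a
      have fe: "to_ac x - r j - (1 + to_ac c * r j) * to_ac y = to_ac (x - y) - to_ac (1 + c * y) * r j" for j
        by (simp add: algebra_simps)
      show "poly Gx (to_ac y) \<in> range to_ac"
      proof (cases "1 + c * y = 0")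
        case True
        have "poly Gx (to_ac y) = to_ac ((x - y) ^ n)" unfolding polyGx fe True by simp
        thus ?thesis by (metis rangeI)
      next
        case False
        define t where "t = (x - y) / (1 + c * y)"
        have tt: "(1 + c * y) * t = x - y" using False by (simp add: t_def)
        have tt': "to_ac (1 + c * y) * to_ac t = to_ac (x - y)"
          by (simp only: tt flip: to_ac_mult)
        have "to_ac (x - y) - to_ac (1 + c * y) * r j = to_ac (1 + c * y) * (to_ac t - r j)" for j
          by (simp only: right_diff_distrib tt')
        hence "poly Gx (to_ac y) = (\<Prod>j<n. to_ac (1 + c * y) * (to_ac t - r j))"
          unfolding polyGx fe by simp
        also have "\<dots> = to_ac (1 + c * y) ^ n * (\<Prod>j<n. to_ac t - r j)"
          by (simp add: prod.distrib)
        also have "(\<Prod>j<n. to_ac t - r j) = poly (\<Prod>j<n. [:-r j, 1:]) (to_ac t)"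
          by (simp add: poly_prod)
        also have "\<dots> = poly (map_poly to_ac p) (to_ac t) / to_ac (Polynomial.lead_coeff p)"
          using lc0 by (subst fac) simp
        also have "\<dots> = to_ac (poly p t / Polynomial.lead_coeff p)"
          by (simp add: poly_map_emb to_ac_divide)
        finally show ?thesis by (metis rangeI to_ac_mult to_ac_power)
      qed
    qed
    then obtain G' where G': "Gx = map_poly to_ac G'"
      using interp[of "UNIV :: 'a set" Gx] infinite_UNIV_char_0 by blast
    have "(\<Prod>x\<in>#A. poly (map_poly to_ac G') x) \<in> range to_ac"
      by (rule norm_lemma[OF p0 fac'])
    also have "(\<Prod>x\<in>#A. poly (map_poly to_ac G') x) = (\<Prod>i<n. poly Gx (r i))"
      using Aprod[of "poly (map_poly to_ac G')"] G' by simp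
    also have "\<dots> = Phi x"
      unfolding Phi_def polyGx h_def by (intro prod.cong refl) (simp add: algebra_simps)
    finally show ?thesis .
  qed
  have Delta_real: "Delta x \<in> range to_ac" for x
  proof -
    have "(\<Prod>z\<in>#A. poly (map_poly to_ac [:x, -2, -c:]) z) \<in> range to_ac"
      by (rule norm_lemma[OF p0 fac'])
    also have "(\<Prod>z\<in>#A. poly (map_poly to_ac [:x, -2, -c:]) z) = Delta x"
      unfolding Aprod Delta_def h_def
      by (intro prod.cong refl) (simp add: map_emb_pCons algebra_simps)
    finally show ?thesis .
  qed
  have decomp: "Phi x = Delta x * (poly qc (to_ac x)) ^ 2" for x
  proof -
    have "Phi x = (\<Prod>i<n. to_ac x - h i i) * (\<Prod>pr\<in>pairs n. to_ac x - h (fst pr) (snd pr)) ^ 2"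
      unfolding Phi_def by (rule prod_square_decomp) (simp add: h_def algebra_simps)
    thus ?thesis unfolding Delta_def qc_def poly_prod by simp
  qed
  define D where "D = (\<Prod>i<n. [:- h i i, 1:])"
  have D0: "D \<noteq> 0" unfolding D_def by (simp add: prod_zero_iff)
  have DD: "poly D (to_ac x) = Delta x" for x unfolding D_def Delta_def poly_prod by simp
  define S where "S = {x. Delta x \<noteq> 0}"
  have infS: "infinite S" unfolding S_def using Delta_infinite[OF D0] DD by simp
  have sq: "poly qc (to_ac x) * poly qc (to_ac x) \<in> range to_ac" if "x \<in> S" for x
  proof -
    have "poly qc (to_ac x) * poly qc (to_ac x) = Phi x / Delta x"
      using that decomp[of x] unfolding S_def by (simp add: field_simps power2_eq_square)
    thus ?thesis using Phi_real Delta_real range_emb_divide by metis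
  qed
  define S1 where "S1 = {x\<in>S. poly qc (to_ac x) \<in> range to_ac}"
  define S2 where "S2 = {x\<in>S. \<exists>t. poly qc (to_ac x) = ii * to_ac t}"
  have "S = S1 \<union> S2"
  proof
    show "S \<subseteq> S1 \<union> S2"
    proof
      fix x assume "x \<in> S"
      then obtain a where "poly qc (to_ac x) * poly qc (to_ac x) = to_ac a" using sq by blast
      from sq_cases[OF this] show "x \<in> S1 \<union> S2" using \<open>x \<in> S\<close> unfolding S1_def S2_def by auto
    qed
  qed (auto simp: S1_def S2_def)
  hence "infinite S1 \<or> infinite S2" using infS by auto
  thus ?thesis
  proof
    assume "infinite S1"
    moreover have "\<forall>x\<in>S1. poly qc (to_ac x) \<in> range to_ac" unfolding S1_def by auto
    ultimately show ?thesis using interp unfolding qc_def h_def by blast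
  next
    assume inf2: "infinite S2"
    have "\<forall>x\<in>S2. poly (Polynomial.smult (- ii) qc) (to_ac x) \<in> range to_ac"
    proof
      fix x assume "x \<in> S2"
      then obtain t where "poly qc (to_ac x) = ii * to_ac t" unfolding S2_def by auto
      hence "poly (Polynomial.smult (- ii) qc) (to_ac x) = - (ii * ii) * to_ac t" by simp
      thus "poly (Polynomial.smult (- ii) qc) (to_ac x) \<in> range to_ac" by (simp add: ii_sq)
    qed
    then obtain q'' where q'': "Polynomial.smult (- ii) qc = map_poly to_ac q''"
      using interp[OF inf2] by blast
    have "Polynomial.lead_coeff qc = 1" unfolding qc_def by (simp add: lead_coeff_prod)
    moreover have ii0: "ii \<noteq> (0 :: 'a alg_closure)" using ii_sq[where 'a='a] by auto
    ultimately have "Polynomial.lead_coeff (Polynomial.smult (- ii) qc) = - ii" by simp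
    hence "- ii = to_ac (Polynomial.lead_coeff q'')"
      unfolding q'' lead_coeff_map_emb by simp
    hence "ii = to_ac (- Polynomial.lead_coeff q'')" by (metis minus_minus to_ac_minus)
    thus ?thesis using ii_not_real by blast
  qed
qed



lemma laplace:
  fixes p :: "'a::real_closed_field poly"
  assumes "Polynomial.degree p = 2^k * m" "odd m"
  shows "\<exists>z\<in>KK. poly (map_poly to_ac p) z = 0"
  using assms
proof (induction k arbitrary: p m)
  case 0
  hence "odd (Polynomial.degree p)" by simp
  then obtain x where "poly p x = 0" using odd_real_root by blast
  hence "poly (map_poly to_ac p) (to_ac x) = 0" by (simp add: poly_map_emb)
  thus ?case using KK_real by blast
next
  case (Suc k)
  define n where "n = Polynomial.degree p"
  have n2: "n = 2^Suc k * m" using Suc.prems n_def by simp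
  have "m > 0" using Suc.prems(2) by (cases m) auto
  hence npos: "n > 0" using n2 by simp
  hence p0: "p \<noteq> 0" using n_def by auto
  obtain A where A: "size A = Polynomial.degree (map_poly to_ac p)"
     "map_poly to_ac p = Polynomial.smult (Polynomial.lead_coeff (map_poly to_ac p)) (\<Prod>x\<in>#A. [:-x,1:])"
    using alg_closed_imp_factorization[of "map_poly to_ac p"] p0 by auto
  obtain rs where rs: "mset rs = A" using ex_mset by blast
  define r where "r j = rs ! j" for j
  have len: "length rs = n" using A(1) rs n_def by (metis size_mset degree_map_emb)
  have Aprod: "(\<Prod>x\<in>#A. f x) = (\<Prod>j<n. f (r j))" for f :: "'a alg_closure \<Rightarrow> 'b::comm_monoid_mult"
    using prod_mset_mset_nth[of f rs] rs len r_def by simp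
  have AA: "(\<Prod>x\<in>#A. [:-x,1:]) = (\<Prod>j<n. [:-r j, 1:])" by (rule Aprod)
  have fac: "map_poly to_ac p = Polynomial.smult (to_ac (Polynomial.lead_coeff p)) (\<Prod>j<n. [:-r j, 1:])"
    using A(2) unfolding AA lead_coeff_map_emb .
  define h where "h c i j = r i + r j + to_ac c * r i * r j" for c i j
  have ex: "\<forall>N::nat. \<exists>pr\<in>pairs n. h (of_nat N) (fst pr) (snd pr) \<in> KK"
  proof
    fix N :: nat
    define c :: 'a where "c = of_nat N"
    obtain q' where q': "(\<Prod>pr\<in>pairs n. [:-(h c (fst pr) (snd pr)), 1:]) = map_poly to_ac q'"
      using pairs_claim[OF p0 fac AA Aprod, of c] unfolding h_def by blast
    have "Polynomial.degree (\<Prod>pr\<in>pairs n. [:-(h c (fst pr) (snd pr)), 1:]) = card (pairs n)"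
      by (subst degree_prod_eq_sum_degree) auto
    hence degq: "Polynomial.degree q' = card (pairs n)" using q' by simp
    have cp: "2 * card (pairs n) = n * (n - 1)" by (rule card_pairs)
    have "n * (n - 1) = 2 * (2^k * (m * (n - 1)))" using n2 by simp
    hence cp2: "card (pairs n) = 2^k * (m * (n - 1))" using cp by linarith
    have "even n" using n2 by simp
    hence "odd (n - 1)" using npos by (cases n) auto
    hence "odd (m * (n - 1))" using Suc.prems(2) by simp
    from Suc.IH[OF _ this, of q'] degq cp2 obtain z where z: "z \<in> KK" "poly (map_poly to_ac q') z = 0"
      by auto
    hence "poly (\<Prod>pr\<in>pairs n. [:-(h c (fst pr) (snd pr)), 1:]) z = 0" using q' by simp
    hence "\<exists>pr\<in>pairs n. z - h c (fst pr) (snd pr) = 0" by (simp add: poly_prod prod_zero_iff)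
    thus "\<exists>pr\<in>pairs n. h (of_nat N) (fst pr) (snd pr) \<in> KK" using z(1) c_def by auto
  qed
  then obtain g where g: "\<And>N. g N \<in> pairs n \<and> h (of_nat N) (fst (g N)) (snd (g N)) \<in> KK" by metis
  have "\<not> inj g"
  proof
    assume "inj g"
    moreover have "finite (range g)" using g by (intro finite_subset[OF _ finite_pairs[of n]]) auto
    ultimately have "finite (UNIV :: nat set)" using finite_imageD by blast
    thus False by simp
  qed
  then obtain N1 N2 where N: "N1 \<noteq> N2" "g N1 = g N2" unfolding inj_def by blast
  define i where "i = fst (g N1)"
  define j where "j = snd (g N1)"
  define x where "x = r i"
  define y where "y = r j"
  define c1 :: 'a where "c1 = of_nat N1"
  define c2 :: 'a where "c2 = of_nat N2"
  have c12: "c1 - c2 \<noteq> 0" using N(1) by (simp add: c1_def c2_def)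
  have h1: "x + y + to_ac c1 * x * y \<in> KK" using g[of N1] unfolding x_def y_def i_def j_def h_def c1_def by simp
  have h2: "x + y + to_ac c2 * x * y \<in> KK" using g[of N2] N(2) unfolding x_def y_def i_def j_def h_def c2_def by simp
  have "(x + y + to_ac c1 * x * y) - (x + y + to_ac c2 * x * y) = to_ac (c1 - c2) * (x * y)"
    by (simp add: algebra_simps)
  hence "to_ac (c1 - c2) * (x * y) \<in> KK" using KK_diff[OF h1 h2] by simp
  hence "to_ac (1 / (c1 - c2)) * (to_ac (c1 - c2) * (x * y)) \<in> KK" by (rule KK_scale)
  hence xy: "x * y \<in> KK" using c12 by (simp add: to_ac_divide)
  have "(x + y + to_ac c1 * x * y) - to_ac c1 * (x * y) = x + y" by (simp add: algebra_simps)
  hence s: "x + y \<in> KK" using KK_diff[OF h1 KK_scale[OF xy, of c1]] by simp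
  have "x * x - (x + y) * x + x * y = 0" by (simp add: algebra_simps)
  hence xK: "x \<in> KK" using KK_quadratic[OF s xy] by blast
  have "i < n" using g[of N1] unfolding i_def pairs_def by auto
  hence "poly (\<Prod>j<n. [:-r j, 1:]) x = 0"
    unfolding poly_prod x_def by (auto simp: prod_zero_iff)
  hence "poly (map_poly to_ac p) x = 0" by (subst fac) simp
  thus ?case using xK by blast
qed

lemma deg_decomp: "(n::nat) > 0 \<Longrightarrow> \<exists>k m. n = 2^k * m \<and> odd m"
proof (induction n rule: less_induct)
  case (less n)
  show ?case
  proof (cases "odd n")
    case True thus ?thesis by (intro exI[of _ 0] exI[of _ n]) simp
  next
    case False
    then obtain n' where n': "n = 2 * n'" by auto
    hence "n' < n" "n' > 0" using less.prems by auto
    then obtain k m where "n' = 2^k * m" "odd m" using less.IH by blast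
    thus ?thesis using n' by (intro exI[of _ "Suc k"] exI[of _ m]) auto
  qed
qed

lemma nonreal_root_factor:
  fixes p :: "'a::real_closed_field poly"
  assumes "poly (map_poly to_ac p) (to_ac \<alpha> + ii * to_ac \<beta>) = 0" "\<beta> \<noteq> 0"
  shows "[:\<alpha> * \<alpha> + \<beta> * \<beta>, -2 * \<alpha>, 1:] dvd p"
proof -
  define Qd where "Qd = [:\<alpha> * \<alpha> + \<beta> * \<beta>, -2 * \<alpha>, 1:]"
  define z where "z = to_ac \<alpha> + ii * to_ac \<beta>"
  have "poly (map_poly to_ac Qd) z = to_ac (\<alpha> * \<alpha> + \<beta> * \<beta>) + z * (to_ac (-2 * \<alpha>) + z)"
    unfolding Qd_def by (simp add: map_emb_pCons)
  also have "\<dots> = to_ac \<beta> * to_ac \<beta> + (ii * ii) * (to_ac \<beta> * to_ac \<beta>)"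
    unfolding z_def by (simp add: algebra_simps)
  also have "\<dots> = 0" by (simp add: ii_sq)
  finally have Qz: "poly (map_poly to_ac Qd) z = 0" .
  have Qd0: "Qd \<noteq> 0" unfolding Qd_def by simp
  have degQ: "Polynomial.degree Qd = 2" unfolding Qd_def by simp
  define rm where "rm = p mod Qd"
  have "p = p div Qd * Qd + rm" unfolding rm_def by simp
  hence "poly (map_poly to_ac p) z = poly (map_poly to_ac (p div Qd)) z * poly (map_poly to_ac Qd) z + poly (map_poly to_ac rm) z"
    by (metis map_emb_add map_emb_mult poly_add poly_mult)
  hence rz: "poly (map_poly to_ac rm) z = 0" using Qz assms(1) unfolding z_def by simp
  have "Polynomial.degree rm < 2"
  proof (cases "rm = 0")
    case False thus ?thesis using degree_mod_less'[OF Qd0 False[unfolded rm_def]] degQ rm_def by simp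
  qed simp
  hence rm_eq: "rm = [:Polynomial.coeff rm 0, Polynomial.coeff rm 1:]"
    by (intro poly_eqI) (auto simp: coeff_pCons coeff_eq_0 split: nat.splits)
  define r0 where "r0 = Polynomial.coeff rm 0"
  define r1 where "r1 = Polynomial.coeff rm 1"
  have "poly (map_poly to_ac rm) z = to_ac r0 + to_ac r1 * z"
    by (subst rm_eq) (simp add: map_emb_pCons r0_def r1_def)
  also have "\<dots> = to_ac (r0 + r1 * \<alpha>) + ii * to_ac (r1 * \<beta>)"
    unfolding z_def by (simp add: algebra_simps)
  finally have "to_ac (r0 + r1 * \<alpha>) + ii * to_ac (r1 * \<beta>) = to_ac 0" using rz by simp
  from K_indep[OF this] have "r1 * \<beta> = 0" "r0 + r1 * \<alpha> = 0" by auto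
  hence "r1 = 0" "r0 = 0" using assms(2) by auto
  hence "rm = 0" using rm_eq r0_def r1_def by simp
  thus ?thesis unfolding rm_def Qd_def by (simp add: mod_eq_0_iff_dvd)
qed

lemma rcf_ivt:
  fixes p :: "'a::real_closed_field poly"
  assumes "a \<le> b" "poly p a * poly p b \<le> 0"
  shows "\<exists>x. a \<le> x \<and> x \<le> b \<and> poly p x = 0"
  using assms
proof (induction "Polynomial.degree p" arbitrary: p rule: less_induct)
  case less
  show ?case
  proof (cases "poly p a = 0 \<or> poly p b = 0")
    case True thus ?thesis using less.prems by auto
  next
    case False
    hence neg: "poly p a * poly p b < 0" using less.prems by (simp add: less_le)
    have dpos: "Polynomial.degree p > 0"
    proof (rule ccontr)
      assume "\<not> Polynomial.degree p > 0"
      then obtain c where "p = [:c:]" by (metis degree_eq_zeroE gr0I)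
      hence "poly p a * poly p b = c * c" by simp
      thus False using neg by (metis not_less zero_le_square)
    qed
    obtain k m where "Polynomial.degree p = 2^k * m" "odd m" using deg_decomp[OF dpos] by blast
    then obtain z where z: "z \<in> KK" "poly (map_poly to_ac p) z = 0" using laplace by blast
    then obtain \<alpha> \<beta> where zab: "z = to_ac \<alpha> + ii * to_ac \<beta>" by (metis KK_E)
    show ?thesis
    proof (cases "\<beta> = 0")
      case True
      hence "to_ac (poly p \<alpha>) = to_ac 0" using z(2) zab by (simp add: poly_map_emb)
      hence pa: "poly p \<alpha> = 0" by (simp only: to_ac_eq_iff)
      then obtain s where ps: "p = [:-\<alpha>, 1:] * s" using poly_eq_0_iff_dvd by (metis dvdE)
      show ?thesis
      proof (cases "a \<le> \<alpha> \<and> \<alpha> \<le> b")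
        case True thus ?thesis using pa by blast
      next
        case False
        have pos: "(a - \<alpha>) * (b - \<alpha>) > 0"
        proof (cases "\<alpha> < a")
          case True thus ?thesis using less.prems(1) by (intro mult_pos_pos) auto
        next
          case False
          hence "b < \<alpha>" using \<open>\<not> (a \<le> \<alpha> \<and> \<alpha> \<le> b)\<close> by auto
          thus ?thesis using less.prems(1) by (intro mult_neg_neg) auto
        qed
        have "poly p a * poly p b = ((a - \<alpha>) * (b - \<alpha>)) * (poly s a * poly s b)"
          by (subst (1 2) ps) (simp add: algebra_simps)
        hence sneg: "poly s a * poly s b \<le> 0" using neg pos
          by (metis less_le_not_le mult_pos_pos not_le)
        have s0: "s \<noteq> 0" using ps dpos by auto
        have "Polynomial.degree ([:-\<alpha>, 1:] * s) = Polynomial.degree [:-\<alpha>, 1:] + Polynomial.degree s"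
          by (rule degree_mult_eq) (use s0 in auto)
        hence "Polynomial.degree p = Suc (Polynomial.degree s)" using ps by simp
        hence "Polynomial.degree s < Polynomial.degree p" by simp
        from less.hyps[OF this less.prems(1) sneg] obtain x where "a \<le> x" "x \<le> b" "poly s x = 0" by blast
        thus ?thesis using ps by auto
      qed
    next
      case False
      have "[:\<alpha> * \<alpha> + \<beta> * \<beta>, -2 * \<alpha>, 1:] dvd p"
        using nonreal_root_factor[of p \<alpha> \<beta>] z(2) zab False by simp
      then obtain s where ps: "p = [:\<alpha> * \<alpha> + \<beta> * \<beta>, -2 * \<alpha>, 1:] * s" by (elim dvdE)
      have Qpos: "poly [:\<alpha> * \<alpha> + \<beta> * \<beta>, -2 * \<alpha>, 1:] x > 0" for x
      proof -
        have "poly [:\<alpha> * \<alpha> + \<beta> * \<beta>, -2 * \<alpha>, 1:] x = (x - \<alpha>) * (x - \<alpha>) + \<beta> * \<beta>"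
          by (simp add: algebra_simps)
        moreover have "\<beta> * \<beta> > 0" using False by (simp add: not_square_less_zero less_le)
        moreover have "(x - \<alpha>) * (x - \<alpha>) \<ge> 0" by simp
        ultimately show ?thesis by (metis add_nonneg_pos)
      qed
      have "poly p a * poly p b = (poly [:\<alpha> * \<alpha> + \<beta> * \<beta>, -2 * \<alpha>, 1:] a * poly [:\<alpha> * \<alpha> + \<beta> * \<beta>, -2 * \<alpha>, 1:] b) * (poly s a * poly s b)"
        by (subst (1 2) ps) (simp only: poly_mult mult_ac)
      moreover have "poly [:\<alpha> * \<alpha> + \<beta> * \<beta>, -2 * \<alpha>, 1:] a * poly [:\<alpha> * \<alpha> + \<beta> * \<beta>, -2 * \<alpha>, 1:] b > 0"
        using Qpos by simp
      ultimately have sneg: "poly s a * poly s b \<le> 0" using neg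
        by (metis less_le_not_le mult_pos_pos not_le)
      have s0: "s \<noteq> 0" using ps dpos by auto
      have "Polynomial.degree ([:\<alpha> * \<alpha> + \<beta> * \<beta>, -2 * \<alpha>, 1:] * s) = Polynomial.degree [:\<alpha> * \<alpha> + \<beta> * \<beta>, -2 * \<alpha>, 1:] + Polynomial.degree s"
        by (rule degree_mult_eq) (use s0 in auto)
      hence "Polynomial.degree p = Polynomial.degree s + 2" using ps by simp
      hence "Polynomial.degree s < Polynomial.degree p" by simp
      from less.hyps[OF this less.prems(1) sneg] obtain x where "a \<le> x" "x \<le> b" "poly s x = 0" by blast
      thus ?thesis using ps by auto
    qed
  qed
qed



definition cv :: "'a::field poly \<Rightarrow> 'a \<Rightarrow> 'a" where "cv P x = poly (cof P x) x"

definition sE :: "'a::linordered_field \<Rightarrow> 'a poly \<Rightarrow> 'a \<Rightarrow> 'a" where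
  "sE e P x = e ^ Polynomial.order x P * sgn (cv P x)"

lemma lin_pow_nz: "[:-x, 1:] ^ m \<noteq> (0 :: 'a::field poly)"
  by simp

lemma cof_unique:
  fixes P C :: "'a::field poly"
  assumes "P = [:-x,1:]^m * C" "poly C x \<noteq> 0"
  shows "Polynomial.order x P = m" "cof P x = C" "cv P x = poly C x" "P \<noteq> 0"
proof -
  have C0: "C \<noteq> 0" using assms(2) by auto
  show P0: "P \<noteq> 0" using assms(1) C0 by simp
  show om: "Polynomial.order x P = m"
    using assms(1) P0 by (simp add: order_mult order_power_n_n order_0I[OF assms(2)])
  show "cof P x = C" unfolding cof_def om using assms(1) by simp
  thus "cv P x = poly C x" unfolding cv_def by simp
qed

lemma cof_decomp:
  fixes P :: "'a::field poly"
  assumes "P \<noteq> 0"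
  shows "P = [:-x,1:]^Polynomial.order x P * cof P x" "cv P x \<noteq> 0"
proof -
  obtain q where q: "P = [:-x,1:]^Polynomial.order x P * q" "\<not> [:-x,1:] dvd q"
    using order_decomp[OF assms] by blast
  have "poly q x \<noteq> 0" using q(2) by (simp add: poly_eq_0_iff_dvd)
  have cq: "cof P x = q" by (rule cof_unique(2)[OF q(1) \<open>poly q x \<noteq> 0\<close>])
  show "P = [:-x,1:]^Polynomial.order x P * cof P x" using q(1) cq by simp
  show "cv P x \<noteq> 0" using cq \<open>poly q x \<noteq> 0\<close> by (simp add: cv_def)
qed

lemma ord_cv_mult:
  fixes P Q :: "'a::field poly"
  assumes "P \<noteq> 0" "Q \<noteq> 0"
  shows "Polynomial.order x (P * Q) = Polynomial.order x P + Polynomial.order x Q"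
        "cv (P * Q) x = cv P x * cv Q x"
proof -
  have e: "P * Q = [:-x,1:]^(Polynomial.order x P + Polynomial.order x Q) * (cof P x * cof Q x)"
    by (subst (1) cof_decomp(1)[OF assms(1), of x], subst (1) cof_decomp(1)[OF assms(2), of x])
       (simp add: power_add mult_ac)
  have nz: "poly (cof P x * cof Q x) x \<noteq> 0"
    using cof_decomp(2)[OF assms(1)] cof_decomp(2)[OF assms(2)] by (simp add: cv_def)
  show "Polynomial.order x (P * Q) = Polynomial.order x P + Polynomial.order x Q"
    by (rule cof_unique(1)[OF e nz])
  show "cv (P * Q) x = cv P x * cv Q x"
    using cof_unique(3)[OF e nz] by (simp add: cv_def)
qed

lemma ord_cv_uminus:
  fixes P :: "'a::field poly"
  assumes "P \<noteq> 0"
  shows "Polynomial.order x (- P) = Polynomial.order x P" "cv (- P) x = - cv P x"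
proof -
  have e: "- P = [:-x,1:]^(Polynomial.order x P) * (- cof P x)"
    by (subst (1) cof_decomp(1)[OF assms, of x]) simp
  have nz: "poly (- cof P x) x \<noteq> 0" using cof_decomp(2)[OF assms] by (simp add: cv_def)
  show "Polynomial.order x (- P) = Polynomial.order x P" by (rule cof_unique(1)[OF e nz])
  show "cv (- P) x = - cv P x" using cof_unique(3)[OF e nz] by (simp add: cv_def)
qed

lemma ord_cv_add_lt:
  fixes P Q :: "'a::field poly"
  assumes "P \<noteq> 0" "Q \<noteq> 0" "Polynomial.order x P < Polynomial.order x Q"
  shows "P + Q \<noteq> 0" "Polynomial.order x (P + Q) = Polynomial.order x P" "cv (P + Q) x = cv P x"
proof -
  define m where "m = Polynomial.order x P"
  define k where "k = Polynomial.order x Q - m"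
  have k: "k > 0" "Polynomial.order x Q = m + k" using assms(3) by (auto simp: k_def m_def)
  have e: "P + Q = [:-x,1:]^m * (cof P x + [:-x,1:]^k * cof Q x)"
    by (subst (1) cof_decomp(1)[OF assms(1), of x], subst (1) cof_decomp(1)[OF assms(2), of x])
       (simp add: k(2) power_add algebra_simps m_def)
  have pv: "poly (cof P x + [:-x,1:]^k * cof Q x) x = cv P x"
    using k(1) by (simp add: cv_def)
  have nz: "poly (cof P x + [:-x,1:]^k * cof Q x) x \<noteq> 0" using cof_decomp(2)[OF assms(1)] pv by simp
  show "Polynomial.order x (P + Q) = Polynomial.order x P" using cof_unique(1)[OF e nz] by (simp add: m_def)
  show "cv (P + Q) x = cv P x" using cof_unique(3)[OF e nz] pv by simp
  show "P + Q \<noteq> 0" by (rule cof_unique(4)[OF e nz])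
qed

lemma ord_cv_add_eq:
  fixes P Q :: "'a::field poly"
  assumes "P \<noteq> 0" "Q \<noteq> 0" "Polynomial.order x P = Polynomial.order x Q" "cv P x + cv Q x \<noteq> 0"
  shows "P + Q \<noteq> 0" "Polynomial.order x (P + Q) = Polynomial.order x P" "cv (P + Q) x = cv P x + cv Q x"
proof -
  define m where "m = Polynomial.order x P"
  have e: "P + Q = [:-x,1:]^m * (cof P x + cof Q x)"
    by (subst (1) cof_decomp(1)[OF assms(1), of x], subst (1) cof_decomp(1)[OF assms(2), of x])
       (simp add: assms(3) algebra_simps m_def)
  have pv: "poly (cof P x + cof Q x) x = cv P x + cv Q x" by (simp add: cv_def)
  have nz: "poly (cof P x + cof Q x) x \<noteq> 0" using pv assms(4) by simp
  show "Polynomial.order x (P + Q) = Polynomial.order x P" using cof_unique(1)[OF e nz] by (simp add: m_def)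
  show "cv (P + Q) x = cv P x + cv Q x" using cof_unique(3)[OF e nz] pv by simp
  show "P + Q \<noteq> 0" by (rule cof_unique(4)[OF e nz])
qed

lemma ord_add_cancel:
  fixes P Q :: "'a::field poly"
  assumes "P \<noteq> 0" "Q \<noteq> 0" "Polynomial.order x P = Polynomial.order x Q" "cv P x + cv Q x = 0" "P + Q \<noteq> 0"
  shows "Polynomial.order x (P + Q) > Polynomial.order x P"
proof -
  define m where "m = Polynomial.order x P"
  have eq: "P + Q = [:-x,1:]^m * (cof P x + cof Q x)"
    by (subst (1) cof_decomp(1)[OF assms(1), of x], subst (1) cof_decomp(1)[OF assms(2), of x])
       (simp add: assms(3) algebra_simps m_def)
  have "poly (cof P x + cof Q x) x = 0" using assms(4) by (simp add: cv_def)
  then obtain D where "cof P x + cof Q x = [:-x,1:] * D" by (metis dvdE poly_eq_0_iff_dvd)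
  hence "P + Q = [:-x,1:]^Suc m * D" unfolding eq by (simp only: power_Suc mult_ac)
  hence "[:-x,1:]^Suc m dvd P + Q" by (metis dvd_triv_left)
  hence "Suc m \<le> Polynomial.order x (P + Q)" using assms(5) order_divides[of x "Suc m" "P + Q"] by blast
  thus ?thesis by (simp add: m_def)
qed

lemma ord_add_ge:
  fixes P Q :: "'a::field poly"
  assumes "P + Q \<noteq> 0" "m \<le> Polynomial.order x P" "m \<le> Polynomial.order x Q"
  shows "m \<le> Polynomial.order x (P + Q)"
proof -
  have "[:-x,1:]^m dvd P" "[:-x,1:]^m dvd Q" using assms(2,3) by (auto simp: order_divides)
  hence "[:-x,1:]^m dvd P + Q" by simp
  thus ?thesis using assms(1) by (simp add: order_divides)
qed

subsection \<open>Signs near a point\<close>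

lemma sign_const:
  fixes C :: "'a::real_closed_field poly"
  assumes "x \<le> y" "\<forall>z. x \<le> z \<and> z \<le> y \<longrightarrow> poly C z \<noteq> 0"
  shows "sgn (poly C x) = sgn (poly C y)"
proof (rule ccontr)
  assume ne: "sgn (poly C x) \<noteq> sgn (poly C y)"
  have "poly C x \<noteq> 0" "poly C y \<noteq> 0" using assms by auto
  hence "poly C x * poly C y < 0" using ne
    unfolding mult_less_0_iff by (auto simp: sgn_if split: if_splits)
  hence "poly C x * poly C y \<le> 0" by simp
  from rcf_ivt[OF assms(1) this] assms(2) show False by auto
qed

lemma right_sign:
  fixes P :: "'a::real_closed_field poly"
  assumes "P \<noteq> 0" "x < y" "\<forall>z. x < z \<and> z \<le> y \<longrightarrow> poly P z \<noteq> 0"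
  shows "sgn (poly P y) = sE 1 P x"
proof -
  define m where "m = Polynomial.order x P"
  define C where "C = cof P x"
  have P: "P = [:-x,1:]^m * C" and Cx: "poly C x \<noteq> 0"
    using cof_decomp[OF assms(1), of x] by (auto simp: m_def C_def cv_def)
  have "\<forall>z. x \<le> z \<and> z \<le> y \<longrightarrow> poly C z \<noteq> 0"
  proof (intro allI impI)
    fix z assume z: "x \<le> z \<and> z \<le> y"
    show "poly C z \<noteq> 0"
    proof (cases "z = x")
      case False
      hence "poly P z \<noteq> 0" using assms(3) z by auto
      thus ?thesis using P by auto
    qed (use Cx in auto)
  qed
  hence "sgn (poly C x) = sgn (poly C y)" using sign_const[of x y C] assms(2) by simp
  moreover have "sgn (poly P y) = sgn ((y - x) ^ m) * sgn (poly C y)" using P by (simp add: sgn_mult)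
  moreover have "sgn ((y - x) ^ m) = 1" using assms(2) by (simp add: power_sgn)
  ultimately show ?thesis by (simp add: sE_def C_def cv_def)
qed

lemma left_sign:
  fixes P :: "'a::real_closed_field poly"
  assumes "P \<noteq> 0" "y < x" "\<forall>z. y \<le> z \<and> z < x \<longrightarrow> poly P z \<noteq> 0"
  shows "sgn (poly P y) = sE (-1) P x"
proof -
  define m where "m = Polynomial.order x P"
  define C where "C = cof P x"
  have P: "P = [:-x,1:]^m * C" and Cx: "poly C x \<noteq> 0"
    using cof_decomp[OF assms(1), of x] by (auto simp: m_def C_def cv_def)
  have "\<forall>z. y \<le> z \<and> z \<le> x \<longrightarrow> poly C z \<noteq> 0"
  proof (intro allI impI)
    fix z assume z: "y \<le> z \<and> z \<le> x"
    show "poly C z \<noteq> 0"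
    proof (cases "z = x")
      case False
      hence "poly P z \<noteq> 0" using assms(3) z by auto
      thus ?thesis using P by auto
    qed (use Cx in auto)
  qed
  hence "sgn (poly C y) = sgn (poly C x)" using sign_const[of y x C] assms(2) by simp
  moreover have "sgn (poly P y) = sgn ((y - x) ^ m) * sgn (poly C y)" using P by (simp add: sgn_mult)
  moreover have "sgn ((y - x) ^ m) = (-1) ^ m" using assms(2) by (simp add: power_sgn)
  ultimately show ?thesis by (simp add: sE_def C_def cv_def m_def)
qed

lemma no_roots_between:
  fixes W :: "'a::real_closed_field poly"
  assumes "W \<noteq> 0" "a < b" "\<forall>z. a < z \<and> z < b \<longrightarrow> poly W z \<noteq> 0"
  shows "sE 1 W a = sE (-1) W b"
proof -
  define m where "m = (a + b) / 2"
  have m: "a < m" "m < b" using assms(2) by (auto simp: m_def field_simps)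
  have "sgn (poly W m) = sE 1 W a" using right_sign[OF assms(1) m(1)] assms(3) m by auto
  moreover have "sgn (poly W m) = sE (-1) W b" using left_sign[OF assms(1) m(2)] assms(3) m by auto
  ultimately show ?thesis by simp
qed

definition JJ :: "'a::linordered_field poly \<Rightarrow> 'a \<Rightarrow> 'a" where
  "JJ W x = (sE 1 W x - sE (-1) W x) / 2"

lemma telescope:
  fixes W :: "'a::real_closed_field poly"
  assumes "W \<noteq> 0"
  shows "a < b \<Longrightarrow> (\<Sum>x\<in>{x. a < x \<and> x < b \<and> poly W x = 0}. JJ W x) = (sE (-1) W b - sE 1 W a) / 2"
proof (induction "card {x. a < x \<and> x < b \<and> poly W x = 0}" arbitrary: b rule: less_induct)
  case less
  define Z where "Z = {x. a < x \<and> x < b \<and> poly W x = 0}"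
  have finZ: "finite Z" unfolding Z_def
    by (rule finite_subset[OF _ poly_roots_finite[OF assms]]) auto
  show ?case
  proof (cases "Z = {}")
    case True
    hence "sE 1 W a = sE (-1) W b" using no_roots_between[OF assms less.prems] unfolding Z_def by auto
    hence "(\<Sum>x\<in>Z. JJ W x) = (sE (-1) W b - sE 1 W a) / 2" using True by simp
    thus ?thesis unfolding Z_def .
  next
    case False
    define c where "c = Max Z"
    have cZ: "c \<in> Z" using finZ False unfolding c_def by simp
    have cmax: "\<And>z. z \<in> Z \<Longrightarrow> z \<le> c" using finZ unfolding c_def by simp
    have ac: "a < c" "c < b" "poly W c = 0" using cZ unfolding Z_def by auto
    have Zc: "{x. a < x \<and> x < c \<and> poly W x = 0} = Z - {c}"
      using cmax ac unfolding Z_def by fastforce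
    have "card (Z - {c}) < card Z" using finZ cZ by (rule card_Diff1_less)
    hence IH: "(\<Sum>x\<in>Z - {c}. JJ W x) = (sE (-1) W c - sE 1 W a) / 2"
      using less.hyps[of c] ac Zc unfolding Z_def by simp
    have "sE 1 W c = sE (-1) W b"
    proof (rule no_roots_between[OF assms ac(2)], intro allI impI)
      fix z assume z: "c < z \<and> z < b"
      show "poly W z \<noteq> 0"
      proof
        assume "poly W z = 0"
        hence "z \<in> Z" using z ac unfolding Z_def by auto
        thus False using cmax z by force
      qed
    qed
    have "(\<Sum>x\<in>Z. JJ W x) = JJ W c + (\<Sum>x\<in>Z - {c}. JJ W x)"
      using finZ cZ by (simp add: sum.remove)
    also have "\<dots> = JJ W c + (sE (-1) W c - sE 1 W a) / 2" by (simp only: IH)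
    also have "\<dots> = (sE (-1) W b - sE 1 W a) / 2"
      unfolding JJ_def using \<open>sE 1 W c = sE (-1) W b\<close> by (simp add: field_simps)
    finally show ?thesis unfolding Z_def .
  qed
qed



definition IndE :: "'a::linordered_field \<Rightarrow> 'a poly \<Rightarrow> 'a poly \<Rightarrow> 'a \<Rightarrow> 'a" where
  "IndE e P Q x = (if P \<noteq> 0 \<and> Q \<noteq> 0 \<and> Polynomial.order x P < Polynomial.order x Q
     then sE e P x * sE e Q x / 2 else 0)"

definition KE :: "'a::linordered_field \<Rightarrow> 'a poly \<Rightarrow> 'a poly \<Rightarrow> 'a \<Rightarrow> 'a" where
  "KE e B D x = (if B \<noteq> 0 \<and> D \<noteq> 0 \<and> Polynomial.order x B \<noteq> Polynomial.order x D
     then sE e B x * sE e D x else 0)"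

lemma neg1_powi: "(-1::'a::field) powi (int a - int b) = (-1) ^ a * (-1) ^ b"
proof -
  have "(-1::'a) powi (int a - int b) = (-1) powi (int a) / (-1) powi (int b)"
    by (rule power_int_diff) simp
  also have "\<dots> = (-1) ^ a / (-1) ^ b" by (simp add: power_int_of_nat)
  also have "\<dots> = (-1) ^ a * (-1) ^ b"
    by (cases "even b") auto
  finally show ?thesis .
qed

lemma Ind_plus_IndE: "Ind_plus P Q x = IndE 1 P Q x"
  by (auto simp: Ind_plus_def IndE_def val_def sE_def cv_def sgn_mult)

lemma Ind_minus_IndE: "Ind_minus P Q x = IndE (-1) P Q x"
  by (auto simp: Ind_minus_def IndE_def val_def sE_def cv_def sgn_mult neg1_powi mult_ac)

lemma Sign_alt: "Sign P Q x = (if P \<noteq> 0 \<and> Q \<noteq> 0 \<and> Polynomial.order x P = Polynomial.order x Q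
     then sE 1 P x * sE 1 Q x else 0)"
  by (auto simp: Sign_def val_def sE_def cv_def sgn_mult)

lemma sE_mult: "F \<noteq> 0 \<Longrightarrow> G \<noteq> 0 \<Longrightarrow> sE e (F * G) x = sE e F x * sE e G x"
  by (simp add: sE_def ord_cv_mult power_add sgn_mult mult_ac)

lemma sE_uminus: "F \<noteq> 0 \<Longrightarrow> sE e (- F) x = - sE e F x"
  by (simp add: sE_def ord_cv_uminus)

lemma sE_add_lt: "F \<noteq> 0 \<Longrightarrow> G \<noteq> 0 \<Longrightarrow> Polynomial.order x F < Polynomial.order x G \<Longrightarrow> sE e (F + G) x = sE e F x"
  by (simp add: sE_def ord_cv_add_lt)

lemma sE_pm1: "e = 1 \<or> e = -1 \<Longrightarrow> F \<noteq> 0 \<Longrightarrow> sE e F x = 1 \<or> sE e F x = -1"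
  using cof_decomp(2)[of F x] by (cases "even (Polynomial.order x F)") (auto simp: sE_def sgn_if)

lemma abs1:
  fixes a b c d g :: "'a::linordered_field"
  assumes "a = 1 \<or> a = -1" "b = 1 \<or> b = -1" "c = 1 \<or> c = -1" "d = 1 \<or> d = -1" "g = 1 \<or> g = -1"
    and "b * c = a * d \<Longrightarrow> g = a * d"
  shows "g * (a * c) + g * (b * d) = a * b + c * d"
  using assms by (elim disjE) auto

lemma abs2:
  fixes a b c d :: "'a::linordered_field"
  assumes "a = 1 \<or> a = -1" "b = 1 \<or> b = -1" "c = 1 \<or> c = -1" "d = 1 \<or> d = -1"
    and "b * c = - (a * d)"
  shows "a * b + c * d = 0" "a * c = - (b * d)"
  using assms by (elim disjE; simp)+

lemma sgn_add_same: "sgn (u::'a::linordered_field) = sgn v \<Longrightarrow> sgn (u + v) = sgn u"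
  by (auto simp: sgn_if split: if_splits)

lemma sgn_pm1: "(u::'a::linordered_field) \<noteq> 0 \<Longrightarrow> sgn u = 1 \<or> sgn u = -1"
  by (auto simp: sgn_if)

lemma sgn_cancel_lemma:
  fixes p q r s :: "'a::linordered_field"
  assumes "p \<noteq> 0" "q \<noteq> 0" "r \<noteq> 0" "s \<noteq> 0" "p * s + q * r = 0"
  shows "sgn (p * r - q * s) = - sgn (q * s)" "sgn (p * q) + sgn (r * s) = 0" "sgn (p * r) = - sgn (q * s)"
proof -
  have ps: "p * s = - (q * r)" using assms(5) by (simp add: eq_neg_iff_add_eq_0)
  have "p * (p * r - q * s) = r * (p * p + q * q)"
  proof -
    have "p * (q * s) = - (q * (q * r))" using ps by (metis mult.left_commute mult_minus_right)
    thus ?thesis by (simp add: algebra_simps)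
  qed
  moreover have "p * p + q * q > 0"
  proof -
    have "p * p > 0" using assms(1) by (auto simp: zero_less_mult_iff neq_iff)
    moreover have "q * q \<ge> 0" by simp
    ultimately show ?thesis by (rule add_pos_nonneg)
  qed
  ultimately have "sgn p * sgn (p * r - q * s) = sgn r" by (metis sgn_mult sgn_pos mult.right_neutral)
  hence "sgn p * (sgn p * sgn (p * r - q * s)) = sgn p * sgn r" by simp
  hence s1: "sgn (p * r - q * s) = sgn p * sgn r" using assms(1) by (simp add: left_sgn_mult_self_eq)
  have "sgn (p * s) = sgn (- (q * r))" using ps by simp
  hence "sgn q * sgn r = - (sgn p * sgn s)" by (simp add: sgn_mult sgn_minus)
  from abs2[OF sgn_pm1[OF assms(1)] sgn_pm1[OF assms(2)] sgn_pm1[OF assms(3)] sgn_pm1[OF assms(4)] this]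
  have "sgn p * sgn q + sgn r * sgn s = 0" "sgn p * sgn r = - (sgn q * sgn s)" .
  thus "sgn (p * r - q * s) = - sgn (q * s)" "sgn (p * q) + sgn (r * s) = 0" "sgn (p * r) = - sgn (q * s)"
    using s1 by (simp_all add: sgn_mult)
qed

lemma half_main:
  fixes P Q R S :: "'a::linordered_field poly"
  assumes P0: "P \<noteq> 0" and Q0: "Q \<noteq> 0" and R0: "R \<noteq> 0" and S0: "S \<noteq> 0"
    and e: "e = 1 \<or> e = -1"
    and le: "Polynomial.order x P + Polynomial.order x S \<le> Polynomial.order x Q + Polynomial.order x R"
    and nb: "\<not> bad_number P Q R S x"
  shows "IndE e (P * R - Q * S) (P * S + Q * R) x - IndE e P Q x - IndE e R S x
           + KE e (P * S + Q * R) (Q * S) x / 2 = 0"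
proof -
  define mP where "mP = Polynomial.order x P"
  define mQ where "mQ = Polynomial.order x Q"
  define mR where "mR = Polynomial.order x R"
  define mS where "mS = Polynomial.order x S"
  define A where "A = P * R - Q * S"
  define B where "B = P * S + Q * R"
  define D where "D = Q * S"
  define a where "a = sE e P x"
  define b where "b = sE e Q x"
  define c where "c = sE e R x"
  define d where "d = sE e S x"
  have pa: "a = 1 \<or> a = -1" unfolding a_def by (rule sE_pm1[OF e P0])
  have pb: "b = 1 \<or> b = -1" unfolding b_def by (rule sE_pm1[OF e Q0])
  have pc: "c = 1 \<or> c = -1" unfolding c_def by (rule sE_pm1[OF e R0])
  have pd: "d = 1 \<or> d = -1" unfolding d_def by (rule sE_pm1[OF e S0])
  have aa: "a * a = 1" using pa by auto
  have bb: "b * b = 1" using pb by auto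
  have cc: "c * c = 1" using pc by auto
  have dd: "d * d = 1" using pd by auto
  have PR0: "P * R \<noteq> 0" and QS0: "Q * S \<noteq> 0" and PS0: "P * S \<noteq> 0" and QR0: "Q * R \<noteq> 0"
    and nQS0: "- (Q * S) \<noteq> 0"
    using P0 Q0 R0 S0 by auto
  have oPR: "Polynomial.order x (P * R) = mP + mR" using ord_cv_mult[where x=x, OF P0 R0] mP_def mR_def by simp
  have oQS: "Polynomial.order x (Q * S) = mQ + mS" using ord_cv_mult[where x=x, OF Q0 S0] mQ_def mS_def by simp
  have oPS: "Polynomial.order x (P * S) = mP + mS" using ord_cv_mult[where x=x, OF P0 S0] mP_def mS_def by simp
  have oQR: "Polynomial.order x (Q * R) = mQ + mR" using ord_cv_mult[where x=x, OF Q0 R0] mQ_def mR_def by simp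
  have onQS: "Polynomial.order x (- (Q * S)) = mQ + mS" using ord_cv_uminus[where x=x, OF QS0] oQS by simp
  have sPR: "sE e (P * R) x = a * c" using sE_mult[where x=x, OF P0 R0] a_def c_def by simp
  have sQS: "sE e (Q * S) x = b * d" using sE_mult[where x=x, OF Q0 S0] b_def d_def by simp
  have sPS: "sE e (P * S) x = a * d" using sE_mult[where x=x, OF P0 S0] a_def d_def by simp
  have sQR: "sE e (Q * R) x = b * c" using sE_mult[where x=x, OF Q0 R0] b_def c_def by simp
  have snQS: "sE e (- (Q * S)) x = - (b * d)" using sE_uminus[where x=x, OF QS0] sQS by simp
  have Aeq: "A = P * R + - (Q * S)" by (simp add: A_def)
  have Aeq': "A = - (Q * S) + P * R" by (simp add: A_def)
  have Beq: "B = P * S + Q * R" by (simp add: B_def)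
  have D0: "D \<noteq> 0" and oD: "Polynomial.order x D = mQ + mS" and sD: "sE e D x = b * d"
    using QS0 oQS sQS by (auto simp: D_def)
  have IPQ: "IndE e P Q x = (if mP < mQ then a * b / 2 else 0)"
    using P0 Q0 by (simp add: IndE_def mP_def mQ_def a_def b_def)
  have IRS: "IndE e R S x = (if mR < mS then c * d / 2 else 0)"
    using R0 S0 by (simp add: IndE_def mR_def mS_def c_def d_def)
  have goal: "IndE e A B x - (if mP < mQ then a * b / 2 else 0) - (if mR < mS then c * d / 2 else 0)
           + KE e B D x / 2 = 0"
  proof (cases "mP + mS < mQ + mR")
    case True
    have B0: "B \<noteq> 0" and oB: "Polynomial.order x B = mP + mS" and sB: "sE e B x = a * d"
      using ord_cv_add_lt[where x=x, OF PS0 QR0] sE_add_lt[where x=x, OF PS0 QR0] True oPS oQR sPS by (auto simp: Beq)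
    have K: "KE e B D x = (if mP \<noteq> mQ then a * b else 0)"
      using B0 D0 oB oD sB sD dd by (auto simp: KE_def mult_ac)
    consider (a1) "mP + mR < mQ + mS" | (a2) "mP + mR > mQ + mS" | (a3) "mP + mR = mQ + mS"
      by linarith
    then show ?thesis
    proof cases
      case a1
      have A0: "A \<noteq> 0" and oA: "Polynomial.order x A = mP + mR" and sA: "sE e A x = a * c"
        using ord_cv_add_lt[where x=x, OF PR0 nQS0] sE_add_lt[where x=x, OF PR0 nQS0] a1 oPR onQS sPR by (auto simp: Aeq)
      have "mP < mQ" using a1 True by linarith
      moreover have "IndE e A B x = (if mR < mS then c * d / 2 else 0)"
        using A0 B0 oA oB sA sB aa by (auto simp: IndE_def mult_ac)
      ultimately show ?thesis using K by auto
    next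
      case a2
      have A0: "A \<noteq> 0" and oA: "Polynomial.order x A = mQ + mS" and sA: "sE e A x = - (b * d)"
        using ord_cv_add_lt[where x=x, OF nQS0 PR0] sE_add_lt[where x=x, OF nQS0 PR0] a2 oPR onQS snQS by (auto simp: Aeq')
      have "\<not> mR < mS" using a2 True by linarith
      moreover have "IndE e A B x = (if mQ < mP then - (a * b) / 2 else 0)"
        using A0 B0 oA oB sA sB dd by (auto simp: IndE_def mult_ac)
      ultimately show ?thesis using K by auto
    next
      case a3
      have "mP < mQ" "mS < mR" using a3 True by linarith+
      moreover have "IndE e A B x = 0"
      proof (cases "A = 0")
        case False
        have "mP + mR \<le> Polynomial.order x A"
          using ord_add_ge[of "P * R" "- (Q * S)" "mP + mR" x] False oPR onQS a3 by (simp add: Aeq)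
        thus ?thesis using oB \<open>mS < mR\<close> by (simp add: IndE_def)
      qed (simp add: IndE_def)
      ultimately show ?thesis using K by auto
    qed
  next
    case False
    hence eqN: "mP + mS = mQ + mR" using le mP_def mQ_def mR_def mS_def by simp
    define w where "w = cv P x * cv S x + cv Q x * cv R x"
    have cPS: "cv (P * S) x = cv P x * cv S x" using ord_cv_mult[where x=x, OF P0 S0] by simp
    have cQR: "cv (Q * R) x = cv Q x * cv R x" using ord_cv_mult[where x=x, OF Q0 R0] by simp
    have cPR: "cv (P * R) x = cv P x * cv R x" using ord_cv_mult[where x=x, OF P0 R0] by simp
    have cQS: "cv (Q * S) x = cv Q x * cv S x" using ord_cv_mult[where x=x, OF Q0 S0] by simp
    have cnQS: "cv (- (Q * S)) x = - (cv Q x * cv S x)" using ord_cv_uminus[where x=x, OF QS0] cQS by simp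
    have cP0: "cv P x \<noteq> 0" and cQ0: "cv Q x \<noteq> 0" and cR0: "cv R x \<noteq> 0" and cS0: "cv S x \<noteq> 0"
      using cof_decomp(2) P0 Q0 R0 S0 by auto
    have ad: "a * d = e ^ (mP + mS) * sgn (cv P x * cv S x)"
      by (simp add: a_def d_def sE_def mP_def mS_def power_add sgn_mult mult_ac)
    have bc: "b * c = e ^ (mP + mS) * sgn (cv Q x * cv R x)"
      unfolding eqN by (simp add: b_def c_def sE_def mQ_def mR_def power_add sgn_mult mult_ac)
    have bd: "b * d = e ^ (mQ + mS) * sgn (cv Q x * cv S x)"
      by (simp add: b_def d_def sE_def mQ_def mS_def power_add sgn_mult mult_ac)
    have e0: "e \<noteq> 0" using e by auto
    have Bcancel: "B = 0 \<or> Polynomial.order x B > mP + mS" if w0: "w = 0"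
    proof (cases "B = 0")
      case False
      have "cv (P * S) x + cv (Q * R) x = 0" using w0 cPS cQR w_def by simp
      from ord_add_cancel[OF PS0 QR0 _ this] False oPS oQR eqN show ?thesis by (simp add: Beq)
    qed simp
    have bcw: "b * c = - (a * d)" if w0: "w = 0"
    proof -
      have "cv Q x * cv R x = - (cv P x * cv S x)" using w0 unfolding w_def by (simp add: eq_neg_iff_add_eq_0 add.commute)
      thus ?thesis using ad bc by (simp add: sgn_minus)
    qed
    consider (b1) "mP < mQ" | (b2) "mP = mQ" | (b3) "mP > mQ" by linarith
    then show ?thesis
    proof cases
      case b1
      have mRS: "mR < mS" using b1 eqN by linarith
      have A0: "A \<noteq> 0" and oA: "Polynomial.order x A = mP + mR" and sA: "sE e A x = a * c"
        using ord_cv_add_lt[where x=x, OF PR0 nQS0] sE_add_lt[where x=x, OF PR0 nQS0] b1 eqN oPR onQS sPR by (auto simp: Aeq)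
      show ?thesis
      proof (cases "w = 0")
        case False
        have B0: "B \<noteq> 0" and oB: "Polynomial.order x B = mP + mS" and cB: "cv B x = w"
          using ord_cv_add_eq[where x=x, OF PS0 QR0] oPS oQR eqN cPS cQR False w_def by (auto simp: Beq)
        define g where "g = sE e B x"
        have g: "g = e ^ (mP + mS) * sgn w" unfolding g_def sE_def oB cB ..
        have pg: "g = 1 \<or> g = -1" unfolding g_def by (rule sE_pm1[OF e B0])
        have cond: "b * c = a * d \<Longrightarrow> g = a * d"
        proof -
          assume "b * c = a * d"
          hence "sgn (cv Q x * cv R x) = sgn (cv P x * cv S x)" using ad bc e0 by simp
          hence "sgn w = sgn (cv P x * cv S x)" unfolding w_def using sgn_add_same by metis
          thus "g = a * d" using g ad by simp
        qed
        have IAB: "IndE e A B x = g * (a * c) / 2"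
          using A0 B0 oA oB sA mRS by (simp add: IndE_def g_def mult_ac)
        have K: "KE e B D x = g * (b * d)"
          using B0 D0 oB oD b1 by (simp add: KE_def g_def sD)
        have "g * (a * c) + g * (b * d) = a * b + c * d" by (rule abs1[OF pa pb pc pd pg cond])
        thus ?thesis using IAB K b1 mRS by (simp add: field_simps)
      next
        case True
        note w0 = True
        from abs2[OF pa pb pc pd bcw[OF True]] have ab: "a * b + c * d = 0" "a * c = - (b * d)" by auto
        show ?thesis
        proof (cases "B = 0")
          case True
          thus ?thesis using ab b1 mRS by (simp add: IndE_def KE_def field_simps)
        next
          case False
          have oB: "Polynomial.order x B > mP + mS" using Bcancel[OF w0] False by simp
          have "Polynomial.order x B \<noteq> mQ + mS"
          proof
            assume oBD: "Polynomial.order x B = mQ + mS"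
            have "bad_number P Q R S x"
              unfolding bad_number_def using P0 Q0 R0 S0 False oBD oQS b1 eqN
              by (auto simp: val_def mP_def mQ_def mR_def mS_def B_def)
            thus False using nb by simp
          qed
          hence IAB: "IndE e A B x = a * c * sE e B x / 2" and K: "KE e B D x = sE e B x * (b * d)"
            using A0 False oA oB D0 oD sA sD mRS by (auto simp: IndE_def KE_def)
          show ?thesis using IAB K ab b1 mRS by (simp add: field_simps)
        qed
      qed
    next
      case b2
      have mRS: "mR = mS" using b2 eqN by linarith
      show ?thesis
      proof (cases "w = 0")
        case False
        have B0: "B \<noteq> 0" and oB: "Polynomial.order x B = mP + mS"
          using ord_cv_add_eq[where x=x, OF PS0 QR0] oPS oQR eqN cPS cQR False w_def by (auto simp: Beq)
        have "IndE e A B x = 0"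
        proof (cases "A = 0")
          case False
          have "mP + mR \<le> Polynomial.order x A"
            using ord_add_ge[of "P * R" "- (Q * S)" "mP + mR" x] False oPR onQS b2 mRS by (simp add: Aeq)
          thus ?thesis using oB mRS by (simp add: IndE_def)
        qed (simp add: IndE_def)
        moreover have "KE e B D x = 0" using oB oD b2 by (simp add: KE_def)
        ultimately show ?thesis using b2 mRS by simp
      next
        case True
        note w0 = True
        have sc: "sgn (cv P x * cv R x - cv Q x * cv S x) = - sgn (cv Q x * cv S x)"
          using sgn_cancel_lemma(1)[OF cP0 cQ0 cR0 cS0] w0 w_def by simp
        have csum: "cv (P * R) x + cv (- (Q * S)) x \<noteq> 0"
        proof
          assume "cv (P * R) x + cv (- (Q * S)) x = 0"
          hence "cv P x * cv R x - cv Q x * cv S x = 0" using cPR cnQS by simp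
          hence "sgn (cv Q x * cv S x) = 0" using sc by simp
          thus False using cQ0 cS0 by (auto simp: sgn_mult sgn_if split: if_splits)
        qed
        have A0: "A \<noteq> 0" and oA: "Polynomial.order x A = mQ + mS"
          and cA: "cv A x = cv P x * cv R x - cv Q x * cv S x"
          using ord_cv_add_eq[where x=x, OF PR0 nQS0 _ csum] oPR onQS b2 mRS cPR cnQS by (auto simp: Aeq)
        have sA: "sE e A x = - (b * d)"
          unfolding sE_def oA cA sc bd by simp
        show ?thesis
        proof (cases "B = 0")
          case True
          thus ?thesis using b2 mRS by (simp add: IndE_def KE_def)
        next
          case False
          have oB: "Polynomial.order x B > mP + mS" using Bcancel[OF w0] False by simp
          hence IAB: "IndE e A B x = - (b * d) * sE e B x / 2" and K: "KE e B D x = sE e B x * (b * d)"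
            using A0 False oA D0 oD sA sD b2 by (auto simp: IndE_def KE_def)
          show ?thesis using IAB K b2 mRS by (simp add: field_simps)
        qed
      qed
    next
      case b3
      have mRS: "mS < mR" using b3 eqN by linarith
      have A0: "A \<noteq> 0" and oA: "Polynomial.order x A = mQ + mS" and sA: "sE e A x = - (b * d)"
        using ord_cv_add_lt[where x=x, OF nQS0 PR0] sE_add_lt[where x=x, OF nQS0 PR0] b3 eqN oPR onQS snQS by (auto simp: Aeq')
      show ?thesis
      proof (cases "B = 0")
        case True
        thus ?thesis using b3 mRS by (simp add: IndE_def KE_def)
      next
        case False
        have "mP + mS \<le> Polynomial.order x B"
          using ord_add_ge[of "P * S" "Q * R" "mP + mS" x] False oPS oQR eqN by (simp add: Beq)
        hence oB: "Polynomial.order x B > mQ + mS" using b3 by linarith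
        hence IAB: "IndE e A B x = - (b * d) * sE e B x / 2" and K: "KE e B D x = sE e B x * (b * d)"
          using A0 False oA D0 oD sA sD by (auto simp: IndE_def KE_def)
        show ?thesis using IAB K b3 mRS by (simp add: field_simps)
      qed
    qed
  qed
  thus ?thesis using IPQ IRS by (simp add: A_def B_def D_def)
qed



lemma IndE_mult_left:
  fixes P R S :: "'a::linordered_field poly"
  assumes "P \<noteq> 0" "e = 1 \<or> e = -1"
  shows "IndE e (P * R) (P * S) x = IndE e R S x"
proof (cases "R = 0 \<or> S = 0")
  case True thus ?thesis by (auto simp: IndE_def)
next
  case False
  hence R0: "R \<noteq> 0" and S0: "S \<noteq> 0" by auto
  have sq: "sE e P x * sE e P x = 1" using sE_pm1[where x=x, OF assms(2,1)] by auto
  have "sE e (P * R) x * sE e (P * S) x = (sE e P x * sE e P x) * (sE e R x * sE e S x)"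
    by (simp add: sE_mult[OF assms(1) R0] sE_mult[OF assms(1) S0] mult_ac)
  thus ?thesis using assms(1) R0 S0 sq by (simp add: IndE_def ord_cv_mult)
qed

lemma deg1:
  fixes Q R S :: "'a::linordered_field poly"
  assumes Q0: "Q \<noteq> 0" and R0: "R \<noteq> 0" and S0: "S \<noteq> 0" and e: "e = 1 \<or> e = -1"
  shows "IndE e (- (Q * S)) (Q * R) x - IndE e R S x + KE e (Q * R) (Q * S) x / 2 = 0"
proof -
  have QS0: "Q * S \<noteq> 0" and QR0: "Q * R \<noteq> 0" using assms by auto
  have bb: "sE e Q x * sE e Q x = 1" using sE_pm1[where x=x, OF e Q0] by auto
  have s1: "sE e (- (Q * S)) x * sE e (Q * R) x = - (sE e R x * sE e S x)"
    using bb by (simp add: sE_uminus[OF QS0] sE_mult[OF Q0 S0] sE_mult[OF Q0 R0] algebra_simps)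
  have s2: "sE e (Q * R) x * sE e (Q * S) x = sE e R x * sE e S x"
    using bb by (simp add: sE_mult[OF Q0 S0] sE_mult[OF Q0 R0] algebra_simps)
  show ?thesis
    using QS0 QR0 R0 S0 s1 s2
    by (auto simp: IndE_def KE_def ord_cv_uminus ord_cv_mult[OF Q0 S0] ord_cv_mult[OF Q0 R0])
qed

lemma bad_sym: "bad_number R S P Q x = bad_number P Q R S x"
  unfolding bad_number_def by (auto simp: mult_ac add_ac)

lemma half_all:
  fixes P Q R S :: "'a::linordered_field poly"
  assumes PQ: "P \<noteq> 0 \<or> Q \<noteq> 0" and RS: "R \<noteq> 0 \<or> S \<noteq> 0" and e: "e = 1 \<or> e = -1"
    and nb: "\<not> bad_number P Q R S x"
  shows "IndE e (P * R - Q * S) (P * S + Q * R) x - IndE e P Q x - IndE e R S x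
           + KE e (P * S + Q * R) (Q * S) x / 2 = 0"
proof -
  consider (Q) "Q = 0" | (S) "Q \<noteq> 0" "S = 0" | (P) "Q \<noteq> 0" "S \<noteq> 0" "P = 0"
    | (R) "Q \<noteq> 0" "S \<noteq> 0" "P \<noteq> 0" "R = 0" | (all) "Q \<noteq> 0" "S \<noteq> 0" "P \<noteq> 0" "R \<noteq> 0"
    by blast
  then show ?thesis
  proof cases
    case Q
    hence "P \<noteq> 0" using PQ by simp
    thus ?thesis using Q IndE_mult_left[OF _ e, of P R S x] by (simp add: IndE_def KE_def)
  next
    case S
    hence "R \<noteq> 0" using RS by simp
    thus ?thesis using S IndE_mult_left[OF _ e, of R P Q x] by (simp add: IndE_def KE_def mult.commute)
  next
    case P
    show ?thesis
    proof (cases "R = 0")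
      case True thus ?thesis using P by (simp add: IndE_def KE_def)
    next
      case False
      thus ?thesis using deg1[OF P(1) False P(2) e, of x] P by (simp add: IndE_def)
    qed
  next
    case R
    have "IndE e (- (S * Q)) (S * P) x - IndE e P Q x + KE e (S * P) (S * Q) x / 2 = 0"
      using deg1[OF R(2) R(3) R(1) e, of x] .
    thus ?thesis using R by (simp add: IndE_def mult.commute)
  next
    case all
    show ?thesis
    proof (cases "Polynomial.order x P + Polynomial.order x S \<le> Polynomial.order x Q + Polynomial.order x R")
      case True
      thus ?thesis using half_main[OF all(3) all(1) all(4) all(2) e True nb] by simp
    next
      case False
      have le: "Polynomial.order x R + Polynomial.order x Q \<le> Polynomial.order x S + Polynomial.order x P"
        using False by simp
      have nb': "\<not> bad_number R S P Q x" using nb bad_sym by metis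
      have "IndE e (R * P - S * Q) (R * Q + S * P) x - IndE e R S x - IndE e P Q x
           + KE e (R * Q + S * P) (S * Q) x / 2 = 0"
        using half_main[OF all(4) all(2) all(3) all(1) e le nb'] .
      thus ?thesis by (simp add: mult.commute add.commute)
    qed
  qed
qed

lemma half_bad:
  fixes P Q R S :: "'a::linordered_field poly"
  assumes bad: "bad_number P Q R S x" and e: "e = 1 \<or> e = -1"
  shows "IndE e (P * R - Q * S) (P * S + Q * R) x - IndE e P Q x - IndE e R S x
           = sE e (P * R - Q * S) x * sE e (P * S + Q * R) x / 2"
    and "KE e (P * S + Q * R) (Q * S) x = 0"
    and "P * R - Q * S \<noteq> 0" "P * S + Q * R \<noteq> 0"
    and "even (Polynomial.order x (P * R - Q * S) + Polynomial.order x (P * S + Q * R))"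
proof -
  define mP where "mP = Polynomial.order x P"
  define mQ where "mQ = Polynomial.order x Q"
  define mR where "mR = Polynomial.order x R"
  define mS where "mS = Polynomial.order x S"
  define A where "A = P * R - Q * S"
  define B where "B = P * S + Q * R"
  have P0: "P \<noteq> 0" and Q0: "Q \<noteq> 0" and R0: "R \<noteq> 0" and S0: "S \<noteq> 0" and B0: "B \<noteq> 0"
    using bad unfolding bad_number_def B_def by auto
  have vals: "int mP - int mQ = int mR - int mS" "int mP - int mQ < 0"
    using bad unfolding bad_number_def val_def mP_def mQ_def mR_def mS_def by auto
  have PR0: "P * R \<noteq> 0" and QS0: "Q * S \<noteq> 0" and PS0: "P * S \<noteq> 0" and QR0: "Q * R \<noteq> 0"
    and nQS0: "- (Q * S) \<noteq> 0"
    using P0 Q0 R0 S0 by auto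
  have oPR: "Polynomial.order x (P * R) = mP + mR" using ord_cv_mult[OF P0 R0] mP_def mR_def by simp
  have oQS: "Polynomial.order x (Q * S) = mQ + mS" using ord_cv_mult[OF Q0 S0] mQ_def mS_def by simp
  have oPS: "Polynomial.order x (P * S) = mP + mS" using ord_cv_mult[OF P0 S0] mP_def mS_def by simp
  have oQR: "Polynomial.order x (Q * R) = mQ + mR" using ord_cv_mult[OF Q0 R0] mQ_def mR_def by simp
  have onQS: "Polynomial.order x (- (Q * S)) = mQ + mS" using ord_cv_uminus[OF QS0] oQS by simp
  have oB: "Polynomial.order x B = mQ + mS"
    using bad unfolding bad_number_def val_def B_def oQS by auto
  have eqN: "mP + mS = mQ + mR" and b1: "mP < mQ" and mRS: "mR < mS" using vals by linarith+
  have Aeq: "A = P * R + - (Q * S)" by (simp add: A_def)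
  have A0: "A \<noteq> 0" and oA: "Polynomial.order x A = mP + mR"
    using ord_cv_add_lt[where x=x, OF PR0 nQS0] b1 eqN oPR onQS mRS by (auto simp: Aeq)
  define a where "a = sE e P x"
  define b where "b = sE e Q x"
  define c where "c = sE e R x"
  define d where "d = sE e S x"
  have pa: "a = 1 \<or> a = -1" unfolding a_def by (rule sE_pm1[OF e P0])
  have pb: "b = 1 \<or> b = -1" unfolding b_def by (rule sE_pm1[OF e Q0])
  have pc: "c = 1 \<or> c = -1" unfolding c_def by (rule sE_pm1[OF e R0])
  have pd: "d = 1 \<or> d = -1" unfolding d_def by (rule sE_pm1[OF e S0])
  define w where "w = cv P x * cv S x + cv Q x * cv R x"
  have cPS: "cv (P * S) x = cv P x * cv S x" using ord_cv_mult[OF P0 S0] by simp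
  have cQR: "cv (Q * R) x = cv Q x * cv R x" using ord_cv_mult[OF Q0 R0] by simp
  have w0: "w = 0"
  proof (rule ccontr)
    assume "w \<noteq> 0"
    hence "Polynomial.order x B = mP + mS"
      using ord_cv_add_eq[where x=x, OF PS0 QR0] oPS oQR eqN cPS cQR w_def by (simp add: B_def)
    thus False using oB b1 by simp
  qed
  have ad: "a * d = e ^ (mP + mS) * sgn (cv P x * cv S x)"
    by (simp add: a_def d_def sE_def mP_def mS_def power_add sgn_mult mult_ac)
  have bc: "b * c = e ^ (mP + mS) * sgn (cv Q x * cv R x)"
    unfolding eqN by (simp add: b_def c_def sE_def mQ_def mR_def power_add sgn_mult mult_ac)
  have "cv Q x * cv R x = - (cv P x * cv S x)" using w0 unfolding w_def
    by (simp add: eq_neg_iff_add_eq_0 add.commute)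
  hence "b * c = - (a * d)" using ad bc by (simp add: sgn_minus)
  from abs2[OF pa pb pc pd this] have ab: "a * b + c * d = 0" by auto
  have IPQ: "IndE e P Q x = a * b / 2"
    using P0 Q0 b1 by (simp add: IndE_def mP_def mQ_def a_def b_def)
  have IRS: "IndE e R S x = c * d / 2"
    using R0 S0 mRS by (simp add: IndE_def mR_def mS_def c_def d_def)
  have IAB: "IndE e A B x = sE e A x * sE e B x / 2"
    using A0 B0 oA oB eqN b1 by (simp add: IndE_def)
  show "IndE e (P * R - Q * S) (P * S + Q * R) x - IndE e P Q x - IndE e R S x
           = sE e (P * R - Q * S) x * sE e (P * S + Q * R) x / 2"
    using IPQ IRS IAB ab unfolding A_def B_def by (simp add: field_simps)
  show "KE e (P * S + Q * R) (Q * S) x = 0"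
    using oB oQS unfolding B_def by (simp add: KE_def)
  show "P * R - Q * S \<noteq> 0" "P * S + Q * R \<noteq> 0" using A0 B0 unfolding A_def B_def by auto
  have "Polynomial.order x A + Polynomial.order x B = 2 * (mQ + mR)" using oA oB eqN by simp
  thus "even (Polynomial.order x (P * R - Q * S) + Polynomial.order x (P * S + Q * R))"
    unfolding A_def B_def by simp
qed



lemma Ind_at_IndE: "Ind_at P Q x = IndE 1 P Q x - IndE (-1) P Q x"
  by (simp add: Ind_at_def Ind_plus_IndE Ind_minus_IndE)

lemma sEm1: "sE (-1) F x = (-1) ^ Polynomial.order x F * sE 1 F x"
  by (simp add: sE_def)

definition JB :: "'a::linordered_field poly \<Rightarrow> 'a poly \<Rightarrow> 'a \<Rightarrow> 'a" where
  "JB B D x = (if B \<noteq> 0 \<and> D \<noteq> 0 then JJ (B * D) x else 0)"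

lemma KE_diff_JB: "(KE 1 B D x - KE (-1) B D x) / 2 = JB B D x"
proof (cases "B \<noteq> 0 \<and> D \<noteq> 0")
  case True
  hence B0: "B \<noteq> 0" and D0: "D \<noteq> 0" by auto
  have J: "JJ (B * D) x = (sE 1 B x * sE 1 D x - sE (-1) B x * sE (-1) D x) / 2"
    unfolding JJ_def by (simp add: sE_mult[OF B0 D0])
  show ?thesis
  proof (cases "Polynomial.order x B = Polynomial.order x D")
    case True
    have "sE (-1) B x * sE (-1) D x = ((-1) ^ Polynomial.order x B * (-1) ^ Polynomial.order x B) * (sE 1 B x * sE 1 D x)"
      unfolding sEm1[of B] sEm1[of D] True by (simp add: mult_ac)
    also have "(-1) ^ Polynomial.order x B * (-1) ^ Polynomial.order x B = (1::'a)"
      by (simp flip: power_add)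
    finally show ?thesis using True B0 D0 J by (simp add: KE_def JB_def)
  next
    case False
    thus ?thesis using B0 D0 J by (simp add: KE_def JB_def)
  qed
next
  case False
  thus ?thesis by (auto simp: KE_def JB_def)
qed

lemma local_interior:
  fixes P Q R S :: "'a::linordered_field poly"
  assumes PQ: "P \<noteq> 0 \<or> Q \<noteq> 0" and RS: "R \<noteq> 0 \<or> S \<noteq> 0"
  shows "Ind_at (P * R - Q * S) (P * S + Q * R) x - Ind_at P Q x - Ind_at R S x
          + JB (P * S + Q * R) (Q * S) x = 0"
proof (cases "bad_number P Q R S x")
  case True
  note h1 = half_bad[OF True, of 1] and h2 = half_bad[OF True, of "-1"]
  have "sE (-1) (P * R - Q * S) x * sE (-1) (P * S + Q * R) x
      = (-1) ^ (Polynomial.order x (P * R - Q * S) + Polynomial.order x (P * S + Q * R))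
        * (sE 1 (P * R - Q * S) x * sE 1 (P * S + Q * R) x)"
    unfolding sEm1[of "P * R - Q * S"] sEm1[of "P * S + Q * R"] by (simp add: power_add mult_ac)
  also have "(-1) ^ (Polynomial.order x (P * R - Q * S) + Polynomial.order x (P * S + Q * R)) = (1::'a)"
    using h1(5) by simp
  finally have eqs: "sE (-1) (P * R - Q * S) x * sE (-1) (P * S + Q * R) x
      = sE 1 (P * R - Q * S) x * sE 1 (P * S + Q * R) x" by simp
  have "JB (P * S + Q * R) (Q * S) x = 0"
    using KE_diff_JB[of "P * S + Q * R" "Q * S" x] h1(2) h2(2) by simp
  thus ?thesis using h1(1) h2(1) eqs unfolding Ind_at_IndE by (simp add: field_simps)
next
  case False
  note h1 = half_all[OF PQ RS _ False, of 1] and h2 = half_all[OF PQ RS _ False, of "-1"]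
  have "JB (P * S + Q * R) (Q * S) x = (KE 1 (P * S + Q * R) (Q * S) x - KE (-1) (P * S + Q * R) (Q * S) x) / 2"
    using KE_diff_JB by metis
  thus ?thesis using h1 h2 unfolding Ind_at_IndE by (simp add: field_simps)
qed

lemma local_right:
  fixes P Q R S :: "'a::linordered_field poly"
  assumes PQ: "P \<noteq> 0 \<or> Q \<noteq> 0" and RS: "R \<noteq> 0 \<or> S \<noteq> 0" and nb: "\<not> bad_number P Q R S x"
  shows "IndE 1 (P * R - Q * S) (P * S + Q * R) x = IndE 1 P Q x + IndE 1 R S x
     + (Sign (P * S + Q * R) (Q * S) x
         - (if P * S + Q * R \<noteq> 0 \<and> Q * S \<noteq> 0 then sE 1 ((P * S + Q * R) * (Q * S)) x else 0)) / 2"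
proof -
  have h: "IndE 1 (P * R - Q * S) (P * S + Q * R) x - IndE 1 P Q x - IndE 1 R S x
           + KE 1 (P * S + Q * R) (Q * S) x / 2 = 0" by (rule half_all[OF PQ RS _ nb]) simp
  have "KE 1 (P * S + Q * R) (Q * S) x + Sign (P * S + Q * R) (Q * S) x
      = (if P * S + Q * R \<noteq> 0 \<and> Q * S \<noteq> 0 then sE 1 ((P * S + Q * R) * (Q * S)) x else 0)"
    by (auto simp: KE_def Sign_alt sE_mult)
  thus ?thesis using h by (simp add: field_simps)
qed

lemma local_left:
  fixes P Q R S :: "'a::linordered_field poly"
  assumes PQ: "P \<noteq> 0 \<or> Q \<noteq> 0" and RS: "R \<noteq> 0 \<or> S \<noteq> 0" and nb: "\<not> bad_number P Q R S x"
  shows "IndE (-1) (P * R - Q * S) (P * S + Q * R) x = IndE (-1) P Q x + IndE (-1) R S x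
     + (Sign (P * S + Q * R) (Q * S) x
         - (if P * S + Q * R \<noteq> 0 \<and> Q * S \<noteq> 0 then sE (-1) ((P * S + Q * R) * (Q * S)) x else 0)) / 2"
proof -
  have h: "IndE (-1) (P * R - Q * S) (P * S + Q * R) x - IndE (-1) P Q x - IndE (-1) R S x
           + KE (-1) (P * S + Q * R) (Q * S) x / 2 = 0" by (rule half_all[OF PQ RS _ nb]) simp
  have "KE (-1) B D x + Sign B D x = (if B \<noteq> 0 \<and> D \<noteq> 0 then sE (-1) (B * D) x else 0)" for B D :: "'a poly"
  proof (cases "B \<noteq> 0 \<and> D \<noteq> 0")
    case True
    hence B0: "B \<noteq> 0" and D0: "D \<noteq> 0" by auto
    show ?thesis
    proof (cases "Polynomial.order x B = Polynomial.order x D")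
      case True
      have "sE (-1) B x * sE (-1) D x = ((-1) ^ Polynomial.order x B * (-1) ^ Polynomial.order x B) * (sE 1 B x * sE 1 D x)"
        unfolding sEm1[of B] sEm1[of D] True by (simp add: mult_ac)
      also have "(-1) ^ Polynomial.order x B * (-1) ^ Polynomial.order x B = (1::'a)"
        by (simp flip: power_add)
      finally show ?thesis using True B0 D0 by (simp add: KE_def Sign_alt sE_mult)
    next
      case False
      thus ?thesis using B0 D0 by (simp add: KE_def Sign_alt sE_mult)
    qed
  next
    case False
    thus ?thesis by (auto simp: KE_def Sign_alt)
  qed
  from this[of "P * S + Q * R" "Q * S"] show ?thesis using h by (simp add: field_simps)
qed

lemma Ind_at_root: "Ind_at P Q x \<noteq> 0 \<Longrightarrow> Q \<noteq> 0 \<and> poly Q x = 0"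
proof -
  assume "Ind_at P Q x \<noteq> 0"
  hence "P \<noteq> 0 \<and> Q \<noteq> 0 \<and> Polynomial.order x P < Polynomial.order x Q"
    unfolding Ind_at_IndE IndE_def by (auto split: if_splits)
  thus ?thesis by (auto simp: order_root)
qed

lemma JB_root: "JB B D x \<noteq> 0 \<Longrightarrow> B \<noteq> 0 \<and> D \<noteq> 0 \<and> poly (B * D) x = 0"
proof -
  assume J: "JB B D x \<noteq> 0"
  hence BD: "B \<noteq> 0" "D \<noteq> 0" by (auto simp: JB_def split: if_splits)
  have "poly (B * D) x = 0"
  proof (rule ccontr)
    assume "poly (B * D) x \<noteq> 0"
    hence "Polynomial.order x (B * D) = 0" by (rule order_0I)
    hence "JJ (B * D) x = 0" by (simp add: JJ_def sE_def)
    thus False using J BD by (simp add: JB_def)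
  qed
  thus ?thesis using BD by simp
qed

lemma Ind_expand:
  assumes "finite Z" "Z \<subseteq> {x. a < x \<and> x < b}" "\<And>x. a < x \<Longrightarrow> x < b \<Longrightarrow> Ind_at P Q x \<noteq> 0 \<Longrightarrow> x \<in> Z"
  shows "Ind P Q a b = IndE 1 P Q a + (\<Sum>x\<in>Z. Ind_at P Q x) - IndE (-1) P Q b"
proof -
  have "(\<Sum>x\<in>{x. a < x \<and> x < b \<and> Ind_at P Q x \<noteq> 0}. Ind_at P Q x) = (\<Sum>x\<in>Z. Ind_at P Q x)"
    by (rule sum.mono_neutral_left) (use assms in auto)
  thus ?thesis unfolding Ind_def Ind_plus_IndE Ind_minus_IndE by simp
qed



theorem proposition2p3:
  fixes P Q R S :: "'a::real_closed_field poly" and a b :: 'a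
  assumes "P \<noteq> 0 \<or> Q \<noteq> 0" and "R \<noteq> 0 \<or> S \<noteq> 0" and "a < b"
    and "\<not> bad_number P Q R S a" and "\<not> bad_number P Q R S b"
  shows "Ind (P * R - Q * S) (P * S + Q * R) a b
         = Ind P Q a b + Ind R S a b - Var (P * S + Q * R) (Q * S) a b"
proof -
  note PQ = assms(1) and RS = assms(2) and ab = assms(3) and nba = assms(4) and nbb = assms(5)
  define A where "A = P * R - Q * S"
  define B where "B = P * S + Q * R"
  define D where "D = Q * S"
  define Zp where "Zp = (if Q = 0 then 1 else Q) * (if S = 0 then 1 else S) * (if B = 0 then 1 else B)"
  have Zp0: "Zp \<noteq> 0" unfolding Zp_def by auto
  define Z where "Z = {x. a < x \<and> x < b \<and> poly Zp x = 0}"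
  have finZ: "finite Z" unfolding Z_def
    by (rule finite_subset[OF _ poly_roots_finite[OF Zp0]]) auto
  have ZS: "Z \<subseteq> {x. a < x \<and> x < b}" unfolding Z_def by auto
  have rootZ: "x \<in> Z" if "a < x" "x < b" "poly Y x = 0" "Y \<noteq> 0" "Y = Q \<or> Y = S \<or> Y = B" for x Y
    using that unfolding Z_def Zp_def by auto
  have IPQ: "Ind P Q a b = IndE 1 P Q a + (\<Sum>x\<in>Z. Ind_at P Q x) - IndE (-1) P Q b"
    by (rule Ind_expand[OF finZ ZS]) (use Ind_at_root rootZ in blast)
  have IRS: "Ind R S a b = IndE 1 R S a + (\<Sum>x\<in>Z. Ind_at R S x) - IndE (-1) R S b"
    by (rule Ind_expand[OF finZ ZS]) (use Ind_at_root rootZ in blast)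
  have IAB: "Ind A B a b = IndE 1 A B a + (\<Sum>x\<in>Z. Ind_at A B x) - IndE (-1) A B b"
    by (rule Ind_expand[OF finZ ZS]) (use Ind_at_root rootZ in blast)
  have loc: "Ind_at A B x = Ind_at P Q x + Ind_at R S x - JB B D x" for x
    using local_interior[OF PQ RS, of x] unfolding A_def B_def D_def by (simp add: field_simps)
  have sumAB: "(\<Sum>x\<in>Z. Ind_at A B x) = (\<Sum>x\<in>Z. Ind_at P Q x) + (\<Sum>x\<in>Z. Ind_at R S x) - (\<Sum>x\<in>Z. JB B D x)"
    unfolding loc by (simp add: sum.distrib sum_subtractf)
  define Wa where "Wa = (if B \<noteq> 0 \<and> D \<noteq> 0 then sE 1 (B * D) a else 0)"
  define Wb where "Wb = (if B \<noteq> 0 \<and> D \<noteq> 0 then sE (-1) (B * D) b else 0)"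
  have sumJ: "(\<Sum>x\<in>Z. JB B D x) = (Wb - Wa) / 2"
  proof (cases "B \<noteq> 0 \<and> D \<noteq> 0")
    case True
    hence B0: "B \<noteq> 0" and Q0: "Q \<noteq> 0" and S0: "S \<noteq> 0" and W0: "B * D \<noteq> 0" by (auto simp: D_def)
    have "Z = {x. a < x \<and> x < b \<and> poly (B * D) x = 0}"
      unfolding Z_def Zp_def using B0 Q0 S0 by (auto simp: D_def)
    moreover have "(\<Sum>x\<in>Z. JB B D x) = (\<Sum>x\<in>Z. JJ (B * D) x)"
      using True by (simp add: JB_def)
    ultimately have "(\<Sum>x\<in>Z. JB B D x) = (sE (-1) (B * D) b - sE 1 (B * D) a) / 2"
      using telescope[OF W0 ab] by simp
    thus ?thesis using True by (simp add: Wa_def Wb_def)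
  next
    case False
    hence "\<And>x. JB B D x = 0" by (auto simp: JB_def)
    moreover have "Wa = 0" "Wb = 0" using False by (auto simp: Wa_def Wb_def)
    ultimately show ?thesis by simp
  qed
  have Ra: "IndE 1 A B a = IndE 1 P Q a + IndE 1 R S a + (Sign B D a - Wa) / 2"
    using local_right[OF PQ RS nba] unfolding A_def B_def D_def Wa_def .
  have Lb: "IndE (-1) A B b = IndE (-1) P Q b + IndE (-1) R S b + (Sign B D b - Wb) / 2"
    using local_left[OF PQ RS nbb] unfolding A_def B_def D_def Wb_def .
  have "Ind A B a b = Ind P Q a b + Ind R S a b - Var B D a b"
    unfolding IAB IPQ IRS sumAB sumJ Ra Lb Var_def by (simp add: field_simps)
  thus ?thesis unfolding A_def B_def D_def .
qed

end
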